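(* Let $g:[0,1]\to\mathbb{R}$ be non-constant, bounded, Riemann integrable and piecewise continuous, with $g(0)=0$. Here piecewise continuity means that $[0,1]$ can be partitioned into finitely many intervals of positive length on each of which $g$ is continuous. Let $h:[-1,1]\to\mathbb{R}$ be non-constant with $h(x)=0$ for $x\le0$, of bounded total variation, and $\alpha$-Hölder continuous on $[0,1]$ for some $\alpha>0$. Assume moreover that $\inf\{x:h(x)\ne0\}=0$. Then $$\sup_{0\le t\le1}\Big|\int_0^1h(x-t)g(x)\,dx-\int_0^1g(x)\,dx\int_0^1h(x-t)\,dx\Big|>0.$$ *)

theory Defs
  imports "HOL-Analysis.Analysis" "HOL-Library.Disjoint_Sets"
begin

definition riemann_integrable_on :: "(real \<Rightarrow> real) \<Rightarrow> real \<Rightarrow> real \<Rightarrow> bool" where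
  "riemann_integrable_on f a b \<longleftrightarrow>
     (\<exists>I. \<forall>e>0. \<exists>\<delta>>0. \<forall>p. p tagged_division_of {a..b} \<and> (\<lambda>x. ball x \<delta>) fine p \<longrightarrow>
        \<bar>(\<Sum>(x,K)\<in>p. Henstock_Kurzweil_Integration.content K * f x) - I\<bar> < e)"

definition piecewise_continuous_on :: "(real \<Rightarrow> real) \<Rightarrow> real \<Rightarrow> real \<Rightarrow> bool" where
  "piecewise_continuous_on f a b \<longleftrightarrow>
     (\<exists>\<I>. finite \<I> \<and> disjoint \<I> \<and> \<Union>\<I> = {a..b} \<and>
        (\<forall>I\<in>\<I>. is_interval I \<and> (\<exists>x\<in>I. \<exists>y\<in>I. x < y) \<and> continuous_on I f))"

definition bounded_variation_on :: "(real \<Rightarrow> real) \<Rightarrow> real \<Rightarrow> real \<Rightarrow> bool" where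
  "bounded_variation_on f a b \<longleftrightarrow>
     (\<exists>M. \<forall>(n::nat) (x::nat \<Rightarrow> real). x 0 = a \<and> x n = b \<and> (\<forall>i<n. x i \<le> x (Suc i)) \<longrightarrow>
        (\<Sum>i<n. \<bar>f (x (Suc i)) - f (x i)\<bar>) \<le> M)"

definition holder_continuous_on :: "real \<Rightarrow> real set \<Rightarrow> (real \<Rightarrow> real) \<Rightarrow> bool" where
  "holder_continuous_on \<alpha> S f \<longleftrightarrow>
     (\<exists>C. \<forall>x\<in>S. \<forall>y\<in>S. \<bar>f x - f y\<bar> \<le> C * \<bar>x - y\<bar> powr \<alpha>)"

end

theory Submission
  imports Defs "HOL-Real_Asymp.Real_Asymp"
begin


definition Zf :: "(real \<Rightarrow> real) \<Rightarrow> bool" where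
  "Zf f \<longleftrightarrow> continuous_on UNIV f \<and> (\<forall>x\<le>0. f x = 0)"

definition cv :: "(real \<Rightarrow> real) \<Rightarrow> (real \<Rightarrow> real) \<Rightarrow> real \<Rightarrow> real" where
  "cv f g t = integral {0..t} (\<lambda>u. f u * g (t - u))"

lemma Zf_cont: "Zf f \<Longrightarrow> continuous_on S f"
  unfolding Zf_def using continuous_on_subset by blast

lemma Zf_zero: "Zf f \<Longrightarrow> x \<le> 0 \<Longrightarrow> f x = 0"
  unfolding Zf_def by blast

lemma Zf_prod_cont: "Zf f \<Longrightarrow> Zf g \<Longrightarrow> continuous_on S (\<lambda>u. f u * g (t - u))"
proof -
  assume "Zf f" "Zf g"
  then have cf: "continuous_on UNIV f" and cg: "continuous_on UNIV g" by (auto simp: Zf_def)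
  have "continuous_on S (\<lambda>u. g (t - u))"
    by (rule continuous_on_compose2[OF cg]) (auto intro!: continuous_intros)
  then show ?thesis using continuous_on_subset[OF cf subset_UNIV] by (rule continuous_on_mult[rotated])
qed

lemma int_zero_outside:
  fixes \<psi> :: "real \<Rightarrow> real"
  assumes "c \<le> a" "a \<le> b" "b \<le> d" "\<psi> integrable_on {c..d}"
    "\<And>x. x \<in> {c..a} \<Longrightarrow> \<psi> x = 0" "\<And>x. x \<in> {b..d} \<Longrightarrow> \<psi> x = 0"
  shows "integral {c..d} \<psi> = integral {a..b} \<psi>"
proof -
  have i1: "\<psi> integrable_on {a..d}"
    by (rule integrable_subinterval_real[OF assms(4)]) (use assms in auto)
  have e1: "integral {c..a} \<psi> + integral {a..d} \<psi> = integral {c..d} \<psi>"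
    by (rule Henstock_Kurzweil_Integration.integral_combine) (use assms in auto)
  have e2: "integral {a..b} \<psi> + integral {b..d} \<psi> = integral {a..d} \<psi>"
    by (rule Henstock_Kurzweil_Integration.integral_combine) (use assms i1 in auto)
  have z1: "integral {c..a} \<psi> = 0"
  proof -
    have "integral {c..a} \<psi> = integral {c..a} (\<lambda>_. 0::real)"
      by (rule integral_cong) (use assms in auto)
    then show ?thesis by simp
  qed
  have z2: "integral {b..d} \<psi> = 0"
  proof -
    have "integral {b..d} \<psi> = integral {b..d} (\<lambda>_. 0::real)"
      by (rule integral_cong) (use assms in auto)
    then show ?thesis by simp
  qed
  show ?thesis using e1 e2 z1 z2 by simp
qed

lemma cv_box:
  assumes "Zf f" "Zf g" "t \<le> T" "0 \<le> T"
  shows "cv f g t = integral {0..T} (\<lambda>u. f u * g (t - u))"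
proof (cases "t < 0")
  case True
  have "integral {0..T} (\<lambda>u. f u * g (t - u)) = integral {0..T} (\<lambda>_. 0::real)"
    by (rule integral_cong) (use assms True Zf_zero[of g] in auto)
  then show ?thesis using True by (simp add: cv_def)
next
  case False
  have "integral {0..T} (\<lambda>u. f u * g (t - u)) = integral {0..t} (\<lambda>u. f u * g (t - u))"
  proof (rule int_zero_outside)
    show "(\<lambda>u. f u * g (t - u)) integrable_on {0..T}"
      by (rule integrable_continuous_real[OF Zf_prod_cont[OF assms(1,2)]])
  qed (use assms False Zf_zero[of g] Zf_zero[of f] in auto)
  then show ?thesis by (simp add: cv_def)
qed

lemma cv_nonpos: "Zf f \<Longrightarrow> t \<le> 0 \<Longrightarrow> cv f g t = 0"
proof -
  assume a: "Zf f" "t \<le> 0"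
  have "integral {0..t} (\<lambda>u. f u * g (t - u)) = integral {0..t} (\<lambda>_. 0::real)"
    by (rule integral_cong) (use a Zf_zero[of f] in auto)
  then show ?thesis by (simp add: cv_def)
qed

lemma Zf_cv:
  assumes "Zf f" "Zf g"
  shows "Zf (cv f g)"
proof -
  have "isCont (cv f g) x0" for x0
  proof -
    define T where "T = \<bar>x0\<bar> + 1"
    have T0: "0 \<le> T" and xT: "x0 < T" by (auto simp: T_def)
    have cf: "continuous_on UNIV f" and cg: "continuous_on UNIV g" using assms by (auto simp: Zf_def)
    have "continuous_on (UNIV \<times> cbox 0 T) (\<lambda>(t, u). f u * g (t - u))"
    proof -
      have c1: "continuous_on (UNIV \<times> cbox 0 T) (\<lambda>p. f (snd p))"
        by (rule continuous_on_compose2[OF cf]) (auto intro!: continuous_intros)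
      have c2: "continuous_on (UNIV \<times> cbox 0 T) (\<lambda>p. g (fst p - snd p))"
        by (rule continuous_on_compose2[OF cg]) (auto intro!: continuous_intros)
      have "continuous_on (UNIV \<times> cbox 0 T) (\<lambda>p. f (snd p) * g (fst p - snd p))"
        using c1 c2 by (rule continuous_on_mult)
      then show ?thesis by (simp add: case_prod_beta')
    qed
    then have "continuous_on UNIV (\<lambda>t. integral (cbox 0 T) (\<lambda>u. f u * g (t - u)))"
      by (rule integral_continuous_on_param)
    then have c1: "continuous_on {..<T} (\<lambda>t. integral {0..T} (\<lambda>u. f u * g (t - u)))"
      by (auto intro: continuous_on_subset)
    have "continuous_on {..<T} (cv f g)"
    proof (rule continuous_on_cong[THEN iffD1, OF refl _ c1])
      fix x assume "x \<in> {..<T}"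
      then show "integral {0..T} (\<lambda>u. f u * g (x - u)) = cv f g x"
        using cv_box[OF assms, of x T] T0 by simp
    qed
    then show ?thesis using xT continuous_on_eq_continuous_at[of "{..<T}" "cv f g"] by simp
  qed
  then have "continuous_on UNIV (cv f g)" by (simp add: continuous_at_imp_continuous_on)
  then show ?thesis using cv_nonpos[OF assms(1)] by (simp add: Zf_def)
qed

lemma Zf_xmul: "Zf f \<Longrightarrow> Zf (\<lambda>x. x * f x)"
  unfolding Zf_def by (auto intro!: continuous_intros)

lemma Zf_pow: "Zf f \<Longrightarrow> Zf (\<lambda>x. x ^ j * f x)"
  unfolding Zf_def by (auto intro!: continuous_intros)

lemma integrable_Zf_prod: "Zf f \<Longrightarrow> Zf g \<Longrightarrow> (\<lambda>u. f u * g (t - u)) integrable_on {a..b}"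
  by (intro integrable_continuous_real Zf_prod_cont)

lemma integral_shift_form:
  fixes F :: "real \<Rightarrow> real"
  shows "integral {a..b} F = integral {a - c..b - c} (\<lambda>x. F (x + c))"
  using integral_shift_real_ivl[of a c b F] by simp

lemma cv_comm:
  assumes "Zf f" "Zf g"
  shows "cv f g t = cv g f t"
proof (cases "t \<le> 0")
  case True
  then show ?thesis using cv_nonpos assms by simp
next
  case False
  have r: "integral {-t..0} (\<lambda>x. f (-x) * g (t + x)) = integral {0..t} (\<lambda>u. f u * g (t - u))"
    using Henstock_Kurzweil_Integration.integral_reflect_real[of t 0 "\<lambda>u. f u * g (t - u)"] by simp
  have s: "integral {-t..0} (\<lambda>x. f (-x) * g (t + x)) = integral {0..t} (\<lambda>x. f (- (x + - t)) * g (t + (x + - t)))"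
    using integral_shift_form[of "-t" 0 "\<lambda>x. f (-x) * g (t + x)" "-t"] by simp
  have "integral {0..t} (\<lambda>x. f (- (x + - t)) * g (t + (x + - t))) = integral {0..t} (\<lambda>v. g v * f (t - v))"
    by (rule integral_cong) (simp add: mult.commute)
  then show ?thesis using r s by (simp add: cv_def)
qed

lemma cont3:
  assumes "Zf f" "Zf g" "Zf h"
  shows "continuous_on S (\<lambda>p. f (snd p) * g (fst p - snd p) * h (t - fst p))"
proof -
  have cf: "continuous_on UNIV f" and cg: "continuous_on UNIV g" and ch: "continuous_on UNIV h"
    using assms by (auto simp: Zf_def)
  have c1: "continuous_on S (\<lambda>p. f (snd p))"
    by (rule continuous_on_compose2[OF cf]) (auto intro!: continuous_intros)
  have c2: "continuous_on S (\<lambda>p. g (fst p - snd p))"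
    by (rule continuous_on_compose2[OF cg]) (auto intro!: continuous_intros)
  have c3: "continuous_on S (\<lambda>p::real\<times>real. h (t - fst p))"
    by (rule continuous_on_compose2[OF ch]) (auto intro!: continuous_intros)
  show ?thesis using continuous_on_mult[OF continuous_on_mult[OF c1 c2] c3] .
qed

lemma cv_assoc:
  assumes "Zf f" "Zf g" "Zf h"
  shows "cv (cv f g) h t = cv f (cv g h) t"
proof (cases "t \<le> 0")
  case True
  then show ?thesis using cv_nonpos Zf_cv assms by simp
next
  case False
  then have t0: "0 \<le> t" by simp
  have L: "cv (cv f g) h t = integral {0..t} (\<lambda>u. integral {0..t} (\<lambda>v. f v * g (u - v) * h (t - u)))"
  proof -
    have "cv (cv f g) h t = integral {0..t} (\<lambda>u. cv f g u * h (t - u))" by (simp add: cv_def)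
    also have "\<dots> = integral {0..t} (\<lambda>u. integral {0..t} (\<lambda>v. f v * g (u - v)) * h (t - u))"
      by (rule integral_cong) (simp add: cv_box[OF assms(1,2)])
    also have "\<dots> = integral {0..t} (\<lambda>u. integral {0..t} (\<lambda>v. f v * g (u - v) * h (t - u)))"
      by (rule integral_cong) simp
    finally show ?thesis .
  qed
  have sw: "integral {0..t} (\<lambda>u. integral {0..t} (\<lambda>v. f v * g (u - v) * h (t - u)))
      = integral {0..t} (\<lambda>v. integral {0..t} (\<lambda>u. f v * g (u - v) * h (t - u)))"
  proof -
    have "continuous_on (cbox (0,0) (t,t)) (\<lambda>(u,v). f v * g (u - v) * h (t - u))"
      using cont3[OF assms, of "cbox (0,0) (t,t)" t] by (simp add: case_prod_beta')
    from integral_swap_continuous[OF this] show ?thesis by (simp add: box_real)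
  qed
  have R: "integral {0..t} (\<lambda>u. f v * g (u - v) * h (t - u)) = f v * cv g h (t - v)"
    if v: "v \<in> {0..t}" for v
  proof -
    have "integral {0..t} (\<lambda>u. f v * g (u - v) * h (t - u)) = f v * integral {0..t} (\<lambda>u. g (u - v) * h (t - u))"
      by (simp add: mult.assoc)
    also have "integral {0..t} (\<lambda>u. g (u - v) * h (t - u)) = integral {v..t} (\<lambda>u. g (u - v) * h (t - u))"
    proof (rule int_zero_outside)
      show "(\<lambda>u. g (u - v) * h (t - u)) integrable_on {0..t}"
      proof -
        have "continuous_on {0..t} (\<lambda>u. g (u - v))"
          by (rule continuous_on_compose2[OF Zf_cont[OF assms(2), of UNIV]]) (auto intro!: continuous_intros)
        moreover have "continuous_on {0..t} (\<lambda>u. h (t - u))"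
          by (rule continuous_on_compose2[OF Zf_cont[OF assms(3), of UNIV]]) (auto intro!: continuous_intros)
        ultimately have "continuous_on {0..t} (\<lambda>u. g (u - v) * h (t - u))"
          by (rule continuous_on_mult)
        then show ?thesis by (rule integrable_continuous_real)
      qed
    qed (use v Zf_zero[OF assms(2)] Zf_zero[OF assms(3)] in auto)
    also have "\<dots> = integral {0..t - v} (\<lambda>w. g w * h (t - v - w))"
      using integral_shift_form[of v t "\<lambda>u. g (u - v) * h (t - u)" v] by (simp add: algebra_simps)
    also have "\<dots> = cv g h (t - v)" by (simp add: cv_def)
    finally show ?thesis by simp
  qed
  have "cv f (cv g h) t = integral {0..t} (\<lambda>v. f v * cv g h (t - v))" by (simp add: cv_def)
  also have "\<dots> = integral {0..t} (\<lambda>v. integral {0..t} (\<lambda>u. f v * g (u - v) * h (t - u)))"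
    by (rule integral_cong) (simp add: R)
  finally show ?thesis using L sw by simp
qed

lemma cv_comm_fun: "Zf f \<Longrightarrow> Zf g \<Longrightarrow> cv f g = cv g f"
  by (rule ext) (rule cv_comm)

lemma cv_assoc_fun: "Zf f \<Longrightarrow> Zf g \<Longrightarrow> Zf h \<Longrightarrow> cv (cv f g) h = cv f (cv g h)"
  by (rule ext) (rule cv_assoc)

lemma cv_four:
  assumes "Zf a" "Zf b" "Zf c" "Zf d"
  shows "cv (cv a b) (cv c d) = cv (cv a d) (cv c b)"
proof -
  have "cv b (cv c d) = cv (cv b c) d" using cv_assoc_fun assms by simp
  also have "\<dots> = cv d (cv b c)" using cv_comm_fun assms Zf_cv by simp
  also have "\<dots> = cv d (cv c b)" using cv_comm_fun assms by simp
  finally have e: "cv b (cv c d) = cv d (cv c b)" .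
  have "cv (cv a b) (cv c d) = cv a (cv b (cv c d))" using cv_assoc_fun assms Zf_cv by simp
  also have "\<dots> = cv a (cv d (cv c b))" using e by simp
  also have "\<dots> = cv (cv a d) (cv c b)" using cv_assoc_fun assms Zf_cv by simp
  finally show ?thesis .
qed

lemma cv_tmul:
  assumes "Zf f" "Zf g"
  shows "t * cv f g t = cv (\<lambda>x. x * f x) g t + cv f (\<lambda>x. x * g x) t"
proof -
  have i1: "(\<lambda>u. u * f u * g (t - u)) integrable_on {0..t}"
    using integrable_Zf_prod[OF Zf_xmul[OF assms(1)] assms(2)] by simp
  have i2: "(\<lambda>u. f u * ((t - u) * g (t - u))) integrable_on {0..t}"
    using integrable_Zf_prod[OF assms(1) Zf_xmul[OF assms(2)]] by simp
  have "cv (\<lambda>x. x * f x) g t + cv f (\<lambda>x. x * g x) t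
      = integral {0..t} (\<lambda>u. u * f u * g (t - u) + f u * ((t - u) * g (t - u)))"
    using integral_add[OF i1 i2] by (simp add: cv_def)
  also have "\<dots> = integral {0..t} (\<lambda>u. t * (f u * g (t - u)))"
    by (rule integral_cong) (simp add: algebra_simps)
  also have "\<dots> = t * cv f g t" by (simp add: cv_def)
  finally show ?thesis by simp
qed

lemma cv_vanish:
  assumes "\<And>x. x \<le> a \<Longrightarrow> f x = 0" "\<And>x. x \<le> b \<Longrightarrow> g x = 0" "t \<le> a + b"
  shows "cv f g t = 0"
proof -
  have "integral {0..t} (\<lambda>u. f u * g (t - u)) = integral {0..t} (\<lambda>_. 0::real)"
  proof (rule integral_cong)
    fix u assume "u \<in> {0..t}"
    show "f u * g (t - u) = 0"
    proof (cases "u \<le> a")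
      case True then show ?thesis using assms(1) by simp
    next
      case False then show ?thesis using assms(2)[of "t - u"] assms(3) by simp
    qed
  qed
  then show ?thesis by (simp add: cv_def)
qed



lemma exp_partial_le:
  fixes y :: real
  assumes "0 \<le> y"
  shows "(\<Sum>k<N. y^k / fact k) \<le> exp y"
proof -
  have s: "(\<lambda>k. y^k / fact k) sums exp y"
    using exp_converges[of y] by (simp add: divide_inverse mult.commute)
  have "(\<Sum>k<N. y^k / fact k) \<le> suminf (\<lambda>k. y^k / fact k)"
    by (rule sum_le_suminf) (use s sums_summable assms in auto)
  then show ?thesis using sums_unique[OF s] by simp
qed

lemma exp_partial_tendsto:
  fixes z :: real
  shows "(\<lambda>K. \<Sum>k<K. z^k / fact k) \<longlonglongrightarrow> exp z"
  using exp_converges[of z] by (simp add: sums_def divide_inverse mult.commute)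

lemma doetsch_A1:
  fixes q :: "real \<Rightarrow> real"
  assumes cont: "continuous_on {0..b} q" and x: "0 < x"
    and bnd: "\<And>n::nat. \<bar>integral {0..b} (\<lambda>v. exp (real n * v) * q v)\<bar> \<le> M"
  shows "\<bar>integral {0..b} (\<lambda>v. (1 - exp (- exp (real n * (v - x)))) * q v)\<bar>
           \<le> M * (exp (exp (- (real n * x))) - 1)"
proof -
  define w where "w v = exp (real n * (v - x))" for v
  define y where "y = exp (- (real n * x))"
  define m where "m N = integral {0..b} (\<lambda>v. exp (real N * v) * q v)" for N :: nat
  define c where "c k = (-1)^k * y^k / fact k" for k :: nat
  define fK where "fK K v = (1 - (\<Sum>k<Suc K. (- w v)^k / fact k)) * q v" for K v
  have M0: "0 \<le> M" using bnd[of 0] by linarith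
  have y0: "0 \<le> y" by (simp add: y_def)
  have wpow: "(- w v)^k / fact k = c k * exp (real (k*n) * v)" for v k
  proof -
    have e1: "w v ^ k = exp (real k * (real n * (v - x)))"
      unfolding w_def by (rule exp_of_nat_mult[symmetric])
    have e2: "y ^ k = exp (real k * (- (real n * x)))"
      unfolding y_def by (rule exp_of_nat_mult[symmetric])
    have e3: "real k * (real n * (v - x)) = real k * (- (real n * x)) + real (k*n) * v"
      by (simp add: algebra_simps)
    have "w v ^ k = exp (real k * (- (real n * x)) + real (k*n) * v)"
      by (simp only: e1 e3)
    also have "\<dots> = exp (real k * (- (real n * x))) * exp (real (k*n) * v)"
      by (rule exp_add)
    also have "\<dots> = y^k * exp (real (k*n) * v)"
      by (simp only: e2)
    finally have "w v ^ k = y^k * exp (real (k*n) * v)" .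
    moreover have "(- w v)^k = (-1)^k * w v ^ k" by (rule power_minus)
    ultimately show ?thesis by (simp add: c_def)
  qed
  have cexp: "continuous_on {0..b} (\<lambda>v. exp (real N * v) * q v)" for N
    by (intro continuous_intros cont)
  have intK: "integral {0..b} (fK K) = - (\<Sum>k<K. c (Suc k) * m (Suc k * n))" for K
  proof -
    have e: "fK K v = q v - (\<Sum>k<Suc K. c k * (exp (real (k*n) * v) * q v))" for v
    proof -
      have "fK K v = (1 - (\<Sum>k<Suc K. c k * exp (real (k*n) * v))) * q v"
        by (simp only: fK_def wpow)
      also have "\<dots> = q v - (\<Sum>k<Suc K. c k * exp (real (k*n) * v)) * q v"
        by (simp only: left_diff_distrib mult_1)
      also have "(\<Sum>k<Suc K. c k * exp (real (k*n) * v)) * q v = (\<Sum>k<Suc K. c k * (exp (real (k*n) * v) * q v))"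
        by (simp only: sum_distrib_right mult.assoc)
      finally show ?thesis .
    qed
    have e': "fK K = (\<lambda>v. q v - (\<Sum>k<Suc K. c k * (exp (real (k*n) * v) * q v)))"
      by (rule ext) (rule e)
    have "integral {0..b} (fK K) = integral {0..b} (\<lambda>v. q v - (\<Sum>k<Suc K. c k * (exp (real (k*n) * v) * q v)))"
      by (simp only: e')
    also have "\<dots> = integral {0..b} q - (\<Sum>k<Suc K. c k * m (k*n))"
    proof -
      have i1: "q integrable_on {0..b}" by (rule integrable_continuous_real[OF cont])
      have i2: "(\<lambda>v. \<Sum>k<Suc K. c k * (exp (real (k*n) * v) * q v)) integrable_on {0..b}"
        by (intro integrable_sum integrable_continuous_real continuous_intros cont) simp
      have "integral {0..b} (\<lambda>v. \<Sum>k<Suc K. c k * (exp (real (k*n) * v) * q v))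
           = (\<Sum>k<Suc K. c k * m (k*n))"
        by (subst integral_sum) (auto simp: m_def intro!: integrable_continuous_real continuous_intros cont)
      then show ?thesis using integral_diff[OF i1 i2] by simp
    qed
    also have "\<dots> = - (\<Sum>k<K. c (Suc k) * m (Suc k * n))"
    proof -
      have sh: "(\<Sum>k<Suc K. c k * m (k*n)) = c 0 * m (0*n) + (\<Sum>k<K. c (Suc k) * m (Suc k * n))"
        by (rule sum.lessThan_Suc_shift)
      have m0: "m (0*n) = integral {0..b} q" by (simp add: m_def)
      have c0: "c 0 = 1" by (simp add: c_def)
      show ?thesis using sh m0 c0 by simp
    qed
    finally show ?thesis .
  qed
  have boundK: "\<bar>integral {0..b} (fK K)\<bar> \<le> M * (exp y - 1)" for K
  proof -
    have "\<bar>integral {0..b} (fK K)\<bar> \<le> (\<Sum>k<K. \<bar>c (Suc k) * m (Suc k * n)\<bar>)"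
      by (simp add: intK sum_abs)
    also have "\<dots> \<le> (\<Sum>k<K. y^(Suc k) / fact (Suc k) * M)"
    proof (rule sum_mono)
      fix k assume "k \<in> {..<K}"
      have cabs: "\<bar>c (Suc k)\<bar> = y^(Suc k) / fact (Suc k)"
        using y0 by (simp add: c_def abs_mult power_abs)
      have mb: "\<bar>m (Suc k * n)\<bar> \<le> M" unfolding m_def by (rule bnd)
      have "\<bar>c (Suc k) * m (Suc k * n)\<bar> = \<bar>c (Suc k)\<bar> * \<bar>m (Suc k * n)\<bar>" by (rule abs_mult)
      also have "\<dots> \<le> \<bar>c (Suc k)\<bar> * M" by (rule mult_left_mono[OF mb]) simp
      also have "\<dots> = y^(Suc k) / fact (Suc k) * M" by (simp only: cabs)
      finally show "\<bar>c (Suc k) * m (Suc k * n)\<bar> \<le> y^(Suc k) / fact (Suc k) * M" .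
    qed
    also have "\<dots> = (\<Sum>k<K. y^(Suc k) / fact (Suc k)) * M"
      by (rule sum_distrib_right[symmetric])
    also have "\<dots> = ((\<Sum>k<Suc K. y^k / fact k) - 1) * M"
    proof -
      have sh2: "(\<Sum>k<Suc K. y^k / fact k) = y^0 / fact 0 + (\<Sum>k<K. y^(Suc k) / fact (Suc k))"
        by (rule sum.lessThan_Suc_shift)
      show ?thesis by (simp only: sh2) simp
    qed
    also have "\<dots> \<le> (exp y - 1) * M"
      using exp_partial_le[OF y0, of "Suc K"] M0 by (intro mult_right_mono) auto
    finally show ?thesis by (simp add: mult.commute)
  qed
  have limK: "(\<lambda>K. integral {0..b} (fK K)) \<longlonglongrightarrow> integral {0..b} (\<lambda>v. (1 - exp (- w v)) * q v)"
  proof (rule dominated_convergence(2))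
    show "fK K integrable_on {0..b}" for K
      unfolding fK_def w_def
      by (intro integrable_continuous_real continuous_intros cont) auto
    show "(\<lambda>v. (1 + exp (exp (real n * b))) * \<bar>q v\<bar>) integrable_on {0..b}"
      by (intro integrable_continuous_real continuous_intros cont)
    show "norm (fK K v) \<le> (1 + exp (exp (real n * b))) * \<bar>q v\<bar>" if v: "v \<in> {0..b}" for K v
    proof -
      have w0: "0 \<le> w v" by (simp add: w_def)
      have "w v \<le> exp (real n * b)"
        unfolding w_def using v x by (auto intro!: mult_left_mono)
      have "\<bar>\<Sum>k<Suc K. (- w v)^k / fact k\<bar> \<le> (\<Sum>k<Suc K. w v^k / fact k)"
        using sum_abs[of "\<lambda>k. (- w v)^k / fact k" "{..<Suc K}"] w0 by (simp add: power_abs)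
      also have "\<dots> \<le> exp (w v)" by (rule exp_partial_le[OF w0])
      also have "\<dots> \<le> exp (exp (real n * b))" using \<open>w v \<le> exp (real n * b)\<close> by simp
      finally have "\<bar>1 - (\<Sum>k<Suc K. (- w v)^k / fact k)\<bar> \<le> 1 + exp (exp (real n * b))" by linarith
      then show ?thesis by (simp add: fK_def abs_mult mult_right_mono)
    qed
    show "(\<lambda>K. fK K v) \<longlonglongrightarrow> (1 - exp (- w v)) * q v" if "v \<in> {0..b}" for v
    proof -
      have "(\<lambda>K. \<Sum>k<Suc K. (- w v)^k / fact k) \<longlonglongrightarrow> exp (- w v)"
        using exp_partial_tendsto[of "- w v"] by (rule LIMSEQ_Suc)
      then show ?thesis unfolding fK_def by (intro tendsto_intros)
    qed
  qed
  have "\<bar>integral {0..b} (\<lambda>v. (1 - exp (- w v)) * q v)\<bar> \<le> M * (exp y - 1)"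
    using tendsto_rabs[OF limK] boundK by (intro LIMSEQ_le_const2) auto
  then show ?thesis by (simp add: w_def y_def)
qed

lemma lim_aux_neg: "c < 0 \<Longrightarrow> (\<lambda>n::nat. 1 - exp (- exp (real n * c))) \<longlonglongrightarrow> (0::real)"
  by real_asymp

lemma lim_aux_pos: "c > 0 \<Longrightarrow> (\<lambda>n::nat. 1 - exp (- exp (real n * c))) \<longlonglongrightarrow> (1::real)"
  by real_asymp

lemma lim_aux_M: "x > 0 \<Longrightarrow> (\<lambda>n::nat. M * (exp (exp (- (real n * x))) - 1)) \<longlonglongrightarrow> (0::real)"
  by real_asymp

lemma doetsch_A2:
  fixes q :: "real \<Rightarrow> real"
  assumes cont: "continuous_on {0..b} q" and x: "0 < x" "x < b"
  shows "(\<lambda>n::nat. integral {0..b} (\<lambda>v. (1 - exp (- exp (real n * (v - x)))) * q v)) \<longlonglongrightarrow> integral {x..b} q"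
proof -
  define L where "L v = (if v < x then 0 else if v = x then (1 - exp (-1)) * q v else q v)" for v
  have lim: "(\<lambda>n::nat. integral {0..b} (\<lambda>v. (1 - exp (- exp (real n * (v - x)))) * q v)) \<longlonglongrightarrow> integral {0..b} L"
  proof (rule dominated_convergence(2))
    show "(\<lambda>v. (1 - exp (- exp (real n * (v - x)))) * q v) integrable_on {0..b}" for n
      by (intro integrable_continuous_real continuous_intros cont)
    show "(\<lambda>v. \<bar>q v\<bar>) integrable_on {0..b}"
      by (intro integrable_continuous_real continuous_intros cont)
    show "norm ((1 - exp (- exp (real n * (v - x)))) * q v) \<le> \<bar>q v\<bar>" for n v
    proof -
      have "0 < exp (- exp (real n * (v - x)))" by simp
      moreover have "exp (- exp (real n * (v - x))) \<le> 1" by simp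
      ultimately have a: "\<bar>1 - exp (- exp (real n * (v - x)))\<bar> \<le> 1" by simp
      have "norm ((1 - exp (- exp (real n * (v - x)))) * q v) = \<bar>1 - exp (- exp (real n * (v - x)))\<bar> * \<bar>q v\<bar>"
        by (simp add: abs_mult)
      also have "\<dots> \<le> 1 * \<bar>q v\<bar>" by (rule mult_right_mono[OF a]) simp
      finally show ?thesis by simp
    qed
    show "(\<lambda>n. (1 - exp (- exp (real n * (v - x)))) * q v) \<longlonglongrightarrow> L v" for v
    proof (cases "v < x")
      case True
      have "(\<lambda>n::nat. 1 - exp (- exp (real n * (v - x)))) \<longlonglongrightarrow> 0"
        using True by (intro lim_aux_neg) simp
      then have "(\<lambda>n. (1 - exp (- exp (real n * (v - x)))) * q v) \<longlonglongrightarrow> 0 * q v"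
        by (intro tendsto_intros)
      then show ?thesis using True by (simp add: L_def)
    next
      case False
      show ?thesis
      proof (cases "v = x")
        case True
        then show ?thesis by (simp add: L_def)
      next
        case False
        with \<open>\<not> v < x\<close> have vx: "v - x > 0" by simp
        have "(\<lambda>n::nat. 1 - exp (- exp (real n * (v - x)))) \<longlonglongrightarrow> 1"
          using vx by (rule lim_aux_pos)
        then have "(\<lambda>n. (1 - exp (- exp (real n * (v - x)))) * q v) \<longlonglongrightarrow> 1 * q v"
          by (intro tendsto_intros)
        then show ?thesis using vx by (simp add: L_def)
      qed
    qed
  qed
  have "integral {0..b} L = integral {x..b} q"
  proof -
    have "integral {0..b} L = integral {0..b} (\<lambda>v. if v \<in> {x..} then q v else 0)"
      by (rule integral_spike[of "{x}"]) (auto simp: L_def)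
    also have "\<dots> = integral ({x..} \<inter> {0..b}) q" by (rule integral_restrict_Int)
    also have "{x..} \<inter> {0..b} = {x..b}" using x by auto
    finally show ?thesis .
  qed
  with lim show ?thesis by simp
qed

lemma doetsch:
  fixes q :: "real \<Rightarrow> real"
  assumes b: "0 < b" and cont: "continuous_on {0..b} q"
    and bnd: "\<And>n::nat. \<bar>integral {0..b} (\<lambda>v. exp (real n * v) * q v)\<bar> \<le> M"
  shows "\<forall>v\<in>{0..b}. q v = 0"
proof -
  have tail: "integral {x..b} q = 0" if x: "0 < x" "x < b" for x
  proof -
    have A2: "(\<lambda>n::nat. integral {0..b} (\<lambda>v. (1 - exp (- exp (real n * (v - x)))) * q v)) \<longlonglongrightarrow> integral {x..b} q"
      by (rule doetsch_A2[OF cont x])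
    have "(\<lambda>n::nat. integral {0..b} (\<lambda>v. (1 - exp (- exp (real n * (v - x)))) * q v)) \<longlonglongrightarrow> 0"
    proof (rule Lim_null_comparison)
      show "\<forall>\<^sub>F n in sequentially. norm (integral {0..b} (\<lambda>v. (1 - exp (- exp (real n * (v - x)))) * q v))
              \<le> M * (exp (exp (- (real n * x))) - 1)"
        using doetsch_A1[OF cont x(1) bnd] by (intro always_eventually) simp
      show "(\<lambda>n::nat. M * (exp (exp (- (real n * x))) - 1)) \<longlonglongrightarrow> 0"
        using x(1) by (rule lim_aux_M)
    qed
    then show ?thesis using A2 LIMSEQ_unique by blast
  qed
  have int0: "q y = 0" if y: "0 < y" "y < b" for y
  proof -
    define F where "F = (\<lambda>z. integral {z..b} q)"
    have d1: "(F has_real_derivative - q y) (at y)"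
      using integral_has_real_derivative'[OF cont, of y] y at_within_Icc_at[of 0 y b]
      by (simp add: F_def)
    have d2: "(F has_real_derivative 0) (at y)"
    proof (rule has_field_derivative_transform_within_open[OF DERIV_const open_greaterThanLessThan])
      show "y \<in> {0<..<b}" using y by simp
      show "\<And>z. z \<in> {0<..<b} \<Longrightarrow> 0 = F z" using tail by (simp add: F_def)
    qed
    from DERIV_unique[OF d1 d2] show ?thesis by simp
  qed
  have cl: "closed {z \<in> {0..b}. q z = 0}"
    by (rule continuous_closed_preimage_constant[OF cont]) simp
  have "{0<..<b} \<subseteq> {z \<in> {0..b}. q z = 0}" using int0 by auto
  then have "closure {0<..<b} \<subseteq> {z \<in> {0..b}. q z = 0}"
    using cl by (rule closure_minimal)
  then show ?thesis using closure_greaterThanLessThan[OF b] by auto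
qed



lemma int_zero_left:
  fixes \<psi> :: "real \<Rightarrow> real"
  assumes "c \<le> a" "a \<le> d" "\<psi> integrable_on {c..d}" "\<And>x. x \<in> {c..a} \<Longrightarrow> \<psi> x = 0"
  shows "integral {c..d} \<psi> = integral {a..d} \<psi>"
proof -
  have e1: "integral {c..a} \<psi> + integral {a..d} \<psi> = integral {c..d} \<psi>"
    by (rule Henstock_Kurzweil_Integration.integral_combine) (use assms in auto)
  have "integral {c..a} \<psi> = integral {c..a} (\<lambda>_. 0::real)"
    by (rule integral_cong) (use assms in auto)
  then show ?thesis using e1 by simp
qed

lemma abs_int_bound:
  fixes f g :: "real \<Rightarrow> real"
  assumes "f integrable_on S" "g integrable_on S" "\<And>x. x \<in> S \<Longrightarrow> \<bar>f x\<bar> \<le> g x"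
  shows "\<bar>integral S f\<bar> \<le> integral S g"
  using Henstock_Kurzweil_Integration.integral_norm_bound_integral[of f S g] assms by simp

lemma integral_reflect_shift:
  fixes F :: "real \<Rightarrow> real"
  shows "integral {0..a} (\<lambda>v. F (a - v)) = integral {0..a} F"
proof -
  have r: "integral {-a..0} (\<lambda>x. F (-x)) = integral {0..a} F"
    using Henstock_Kurzweil_Integration.integral_reflect_real[of a 0 F] by simp
  have s: "integral {-a..0} (\<lambda>x. F (-x)) = integral {0..a} (\<lambda>x. F (- (x + - a)))"
    using integral_shift_form[of "-a" 0 "\<lambda>x. F (-x)" "-a"] by simp
  have "integral {0..a} (\<lambda>x. F (- (x + - a))) = integral {0..a} (\<lambda>v. F (a - v))"
    by (rule integral_cong) simp
  then show ?thesis using r s by simp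
qed

lemma contA:
  assumes "continuous_on UNIV p"
  shows "continuous_on S (\<lambda>z::real\<times>real. exp (c * (d - fst z)) * (p (snd z) * p (fst z - snd z)))"
proof -
  have c1: "continuous_on S (\<lambda>z::real\<times>real. p (snd z))"
    by (rule continuous_on_compose2[OF assms]) (auto intro!: continuous_intros)
  have c2: "continuous_on S (\<lambda>z::real\<times>real. p (fst z - snd z))"
    by (rule continuous_on_compose2[OF assms]) (auto intro!: continuous_intros)
  have c3: "continuous_on S (\<lambda>z::real\<times>real. exp (c * (d - fst z)))"
    by (intro continuous_intros)
  show ?thesis by (rule continuous_on_mult[OF c3 continuous_on_mult[OF c1 c2]])
qed

lemma contB:
  assumes "continuous_on UNIV p"
  shows "continuous_on S (\<lambda>z::real\<times>real. exp (c * (d - snd z)) * (p (fst z) * p (snd z - fst z)))"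
proof -
  have c1: "continuous_on S (\<lambda>z::real\<times>real. p (fst z))"
    by (rule continuous_on_compose2[OF assms]) (auto intro!: continuous_intros)
  have c2: "continuous_on S (\<lambda>z::real\<times>real. p (snd z - fst z))"
    by (rule continuous_on_compose2[OF assms]) (auto intro!: continuous_intros)
  have c3: "continuous_on S (\<lambda>z::real\<times>real. exp (c * (d - snd z)))"
    by (intro continuous_intros)
  show ?thesis by (rule continuous_on_mult[OF c3 continuous_on_mult[OF c1 c2]])
qed

lemma weakS_bound:
  assumes Z: "Zf p" and d: "0 < d" and vz: "\<And>t. t \<le> 2*d \<Longrightarrow> cv p p t = 0"
  shows "\<bar>integral {0..d/2} (\<lambda>r. exp (real n * (d/2 - r)) * p r)\<bar>
           \<le> 3 * integral {0..2*d} (\<lambda>r. \<bar>p r\<bar>)"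
proof -
  have cp: "continuous_on UNIV p" using Z by (simp add: Zf_def)
  have cpS: "continuous_on S p" for S using continuous_on_subset[OF cp] by blast
  have p0: "p x = 0" if "x \<le> 0" for x using Z that by (simp add: Zf_def)
  define C where "C = integral {0..2*d} (\<lambda>r. \<bar>p r\<bar>)"
  define E where "E x = exp (real n * (d/2 - x))" for x
  define A where "A = integral {0..d} (\<lambda>r. E r * p r)"
  define inner where "inner = (\<lambda>u. integral {0..2*d} (\<lambda>t. exp (real n * (d - t)) * (p u * p (t - u))))"
  have intabs: "integral {a..b} (\<lambda>r. \<bar>p r\<bar>) \<le> C" if "0 \<le> a" "b \<le> 2*d" for a b
  proof (cases "a \<le> b")
    case True
    show ?thesis unfolding C_def
      by (rule integral_subset_le) (use that True in \<open>auto intro!: integrable_continuous_real continuous_intros cpS\<close>)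
  next
    case False
    then have "integral {a..b} (\<lambda>r. \<bar>p r\<bar>) = 0" by simp
    moreover have "0 \<le> C" unfolding C_def by (rule integral_nonneg) (auto intro!: integrable_continuous_real continuous_intros cpS)
    ultimately show ?thesis by simp
  qed
  have C0: "0 \<le> C" using intabs[of 0 0] d by simp
  have I0: "integral {0..2*d} inner = 0"
  proof -
    have "0 = integral {0..2*d} (\<lambda>t. exp (real n * (d - t)) * cv p p t)"
    proof -
      have "integral {0..2*d} (\<lambda>t. exp (real n * (d - t)) * cv p p t) = integral {0..2*d} (\<lambda>_. 0::real)"
        by (rule integral_cong) (simp add: vz)
      then show ?thesis by simp
    qed
    also have "\<dots> = integral {0..2*d} (\<lambda>t. integral {0..2*d} (\<lambda>u. exp (real n * (d - t)) * (p u * p (t - u))))"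
      by (rule integral_cong) (use d in \<open>simp add: cv_box[OF Z Z]\<close>)
    also have "\<dots> = integral {0..2*d} inner"
    proof -
      have "continuous_on (cbox (0,0) (2*d,2*d)) (\<lambda>(t,u). exp (real n * (d - t)) * (p u * p (t - u)))"
        using contA[OF cp, of "cbox (0,0) (2*d,2*d)" "real n" d] by (simp add: case_prod_beta')
      from integral_swap_continuous[OF this] show ?thesis unfolding inner_def by (simp only: box_real)
    qed
    finally show ?thesis by simp
  qed
  have inner_cont: "continuous_on UNIV inner"
  proof -
    have "continuous_on (UNIV \<times> cbox 0 (2*d)) (\<lambda>(u,t). exp (real n * (d - t)) * (p u * p (t - u)))"
      using contB[OF cp, of "UNIV \<times> cbox 0 (2*d)" "real n" d] by (simp add: case_prod_beta')
    from integral_continuous_on_param[OF this] show ?thesis unfolding inner_def by (simp only: box_real)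
  qed
  have inner_int: "inner integrable_on {a..b}" for a b
    by (rule integrable_continuous_real) (rule continuous_on_subset[OF inner_cont], simp)
  have inner_eq: "inner u = p u * integral {0..2*d-u} (\<lambda>r. exp (real n * (d - u - r)) * p r)"
    if u: "u \<in> {0..2*d}" for u
  proof -
    have "inner u = p u * integral {0..2*d} (\<lambda>t. exp (real n * (d - t)) * p (t - u))"
      unfolding inner_def by (simp add: algebra_simps)
    also have "integral {0..2*d} (\<lambda>t. exp (real n * (d - t)) * p (t - u))
        = integral {0-u..2*d-u} (\<lambda>r. exp (real n * (d - (r + u))) * p (r + u - u))"
      by (rule integral_shift_form)
    also have "\<dots> = integral {0..2*d-u} (\<lambda>r. exp (real n * (d - (r + u))) * p (r + u - u))"
      by (rule int_zero_left) (use u p0 in \<open>auto intro!: integrable_continuous_real continuous_intros cpS\<close>)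
    also have "\<dots> = integral {0..2*d-u} (\<lambda>r. exp (real n * (d - u - r)) * p r)"
      by (rule integral_cong) (simp add: algebra_simps)
    finally show ?thesis .
  qed
  have upper: "\<bar>integral {d..2*d} inner\<bar> \<le> C * C"
  proof -
    have "\<bar>inner u\<bar> \<le> C * \<bar>p u\<bar>" if u: "u \<in> {d..2*d}" for u
    proof -
      have b1: "\<bar>integral {0..2*d-u} (\<lambda>r. exp (real n * (d - u - r)) * p r)\<bar> \<le> integral {0..2*d-u} (\<lambda>r. \<bar>p r\<bar>)"
      proof (rule abs_int_bound)
        show "(\<lambda>r. exp (real n * (d - u - r)) * p r) integrable_on {0..2*d-u}"
          by (intro integrable_continuous_real continuous_intros cpS)
        show "(\<lambda>r. \<bar>p r\<bar>) integrable_on {0..2*d-u}"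
          by (intro integrable_continuous_real continuous_intros cpS)
        fix r assume r: "r \<in> {0..2*d-u}"
        have "exp (real n * (d - u - r)) \<le> 1" using u r by (auto simp: mult_nonneg_nonpos)
        then show "\<bar>exp (real n * (d - u - r)) * p r\<bar> \<le> \<bar>p r\<bar>"
          using mult_left_le_one_le[of "\<bar>p r\<bar>" "exp (real n * (d - u - r))"] by (simp add: abs_mult)
      qed
      have "\<bar>inner u\<bar> = \<bar>p u\<bar> * \<bar>integral {0..2*d-u} (\<lambda>r. exp (real n * (d - u - r)) * p r)\<bar>"
        using u d by (simp add: inner_eq abs_mult)
      also have "\<dots> \<le> \<bar>p u\<bar> * C"
        using b1 intabs[of 0 "2*d-u"] u d by (intro mult_left_mono) auto
      finally show ?thesis by (simp add: mult.commute)
    qed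
    then have "\<bar>integral {d..2*d} inner\<bar> \<le> integral {d..2*d} (\<lambda>u. C * \<bar>p u\<bar>)"
      by (intro abs_int_bound)
         (auto intro!: integrable_continuous_real continuous_intros cpS inner_int)
    also have "\<dots> = C * integral {d..2*d} (\<lambda>u. \<bar>p u\<bar>)" by simp
    also have "\<dots> \<le> C * C" using intabs[of d "2*d"] d C0 by (intro mult_left_mono) auto
    finally show ?thesis .
  qed
  have lower: "\<bar>integral {0..d} inner - A * A\<bar> \<le> C * C"
  proof -
    have decomp: "inner u - A * (E u * p u) = p u * integral {d..2*d-u} (\<lambda>r. exp (real n * (d - u - r)) * p r)"
      if u: "u \<in> {0..d}" for u
    proof -
      have ir: "(\<lambda>r. exp (real n * (d - u - r)) * p r) integrable_on {0..2*d-u}"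
        by (intro integrable_continuous_real continuous_intros cpS)
      have sp: "integral {0..d} (\<lambda>r. exp (real n * (d - u - r)) * p r) + integral {d..2*d-u} (\<lambda>r. exp (real n * (d - u - r)) * p r)
          = integral {0..2*d-u} (\<lambda>r. exp (real n * (d - u - r)) * p r)"
        by (rule Henstock_Kurzweil_Integration.integral_combine) (use u d ir in auto)
      have f1: "integral {0..d} (\<lambda>r. exp (real n * (d - u - r)) * p r) = E u * A"
      proof -
        have "integral {0..d} (\<lambda>r. exp (real n * (d - u - r)) * p r) = integral {0..d} (\<lambda>r. E u * (E r * p r))"
        proof (rule integral_cong)
          fix r
          have "real n * (d - u - r) = real n * (d/2 - u) + real n * (d/2 - r)" by (simp add: algebra_simps)
          then have "exp (real n * (d - u - r)) = E u * E r" by (simp add: E_def exp_add[symmetric])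
          then show "exp (real n * (d - u - r)) * p r = E u * (E r * p r)" by simp
        qed
        also have "\<dots> = E u * A" by (simp add: A_def)
        finally show ?thesis .
      qed
      have "inner u = p u * integral {0..2*d-u} (\<lambda>r. exp (real n * (d - u - r)) * p r)"
        by (rule inner_eq) (use u d in auto)
      also have "\<dots> = p u * (E u * A + integral {d..2*d-u} (\<lambda>r. exp (real n * (d - u - r)) * p r))"
        using sp f1 by simp
      finally show ?thesis by (simp add: algebra_simps)
    qed
    have bnd: "\<bar>inner u - A * (E u * p u)\<bar> \<le> C * \<bar>p u\<bar>" if u: "u \<in> {0..d}" for u
    proof -
      have b1: "\<bar>integral {d..2*d-u} (\<lambda>r. exp (real n * (d - u - r)) * p r)\<bar> \<le> integral {d..2*d-u} (\<lambda>r. \<bar>p r\<bar>)"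
      proof (rule abs_int_bound)
        show "(\<lambda>r. exp (real n * (d - u - r)) * p r) integrable_on {d..2*d-u}"
          by (intro integrable_continuous_real continuous_intros cpS)
        show "(\<lambda>r. \<bar>p r\<bar>) integrable_on {d..2*d-u}"
          by (intro integrable_continuous_real continuous_intros cpS)
        fix r assume r: "r \<in> {d..2*d-u}"
        have "exp (real n * (d - u - r)) \<le> 1" using u r by (auto simp: mult_nonneg_nonpos)
        then show "\<bar>exp (real n * (d - u - r)) * p r\<bar> \<le> \<bar>p r\<bar>"
          using mult_left_le_one_le[of "\<bar>p r\<bar>" "exp (real n * (d - u - r))"] by (simp add: abs_mult)
      qed
      have "\<bar>inner u - A * (E u * p u)\<bar> = \<bar>p u\<bar> * \<bar>integral {d..2*d-u} (\<lambda>r. exp (real n * (d - u - r)) * p r)\<bar>"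
        using u by (simp add: decomp abs_mult)
      also have "\<dots> \<le> \<bar>p u\<bar> * C"
        using b1 intabs[of d "2*d-u"] u d by (intro mult_left_mono) auto
      finally show ?thesis by (simp add: mult.commute)
    qed
    have iE: "(\<lambda>u. A * (E u * p u)) integrable_on {0..d}"
      unfolding E_def by (intro integrable_continuous_real continuous_intros cpS)
    have eqd: "integral {0..d} inner - A * A = integral {0..d} (\<lambda>u. inner u - A * (E u * p u))"
      using integral_diff[OF inner_int iE] by (simp add: A_def)
    have "\<bar>integral {0..d} (\<lambda>u. inner u - A * (E u * p u))\<bar> \<le> integral {0..d} (\<lambda>u. C * \<bar>p u\<bar>)"
    proof (rule abs_int_bound)
      show "(\<lambda>u. inner u - A * (E u * p u)) integrable_on {0..d}"
        by (rule integrable_diff[OF inner_int iE])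
      show "(\<lambda>u. C * \<bar>p u\<bar>) integrable_on {0..d}"
        by (intro integrable_continuous_real continuous_intros cpS)
    qed (rule bnd)
    then have "\<bar>integral {0..d} inner - A * A\<bar> \<le> integral {0..d} (\<lambda>u. C * \<bar>p u\<bar>)"
      using eqd by simp
    also have "\<dots> = C * integral {0..d} (\<lambda>u. \<bar>p u\<bar>)" by simp
    also have "\<dots> \<le> C * C" using intabs[of 0 d] d C0 by (intro mult_left_mono) auto
    finally show ?thesis .
  qed
  have split: "integral {0..d} inner + integral {d..2*d} inner = integral {0..2*d} inner"
    by (rule Henstock_Kurzweil_Integration.integral_combine) (use d inner_int in auto)
  have "A * A \<le> 2 * (C * C)"
    using I0 split upper lower by linarith
  then have Ab: "\<bar>A\<bar> \<le> 2 * C"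
  proof -
    assume h: "A * A \<le> 2 * (C * C)"
    have CC: "0 \<le> C * C" by simp
    have c4: "(2 * C)\<^sup>2 = 4 * (C*C)" by (simp add: power2_eq_square)
    have "A\<^sup>2 \<le> (2 * C)\<^sup>2" unfolding c4 power2_eq_square using h CC by linarith
    then have "\<bar>A\<bar> \<le> \<bar>2 * C\<bar>" by (simp only: abs_le_square_iff)
    then show ?thesis using C0 by simp
  qed
  have sp2: "integral {0..d/2} (\<lambda>r. E r * p r) + integral {d/2..d} (\<lambda>r. E r * p r) = A"
    unfolding A_def E_def
    by (rule Henstock_Kurzweil_Integration.integral_combine) (use d in \<open>auto intro!: integrable_continuous_real continuous_intros cpS\<close>)
  have b2: "\<bar>integral {d/2..d} (\<lambda>r. E r * p r)\<bar> \<le> C"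
  proof -
    have "\<bar>integral {d/2..d} (\<lambda>r. E r * p r)\<bar> \<le> integral {d/2..d} (\<lambda>r. \<bar>p r\<bar>)"
    proof (rule abs_int_bound)
      show "(\<lambda>r. E r * p r) integrable_on {d/2..d}"
        unfolding E_def by (intro integrable_continuous_real continuous_intros cpS)
      show "(\<lambda>r. \<bar>p r\<bar>) integrable_on {d/2..d}"
        by (intro integrable_continuous_real continuous_intros cpS)
      fix r assume r: "r \<in> {d/2..d}"
      have "E r \<le> 1" using r by (auto simp: E_def mult_nonneg_nonpos)
      then show "\<bar>E r * p r\<bar> \<le> \<bar>p r\<bar>"
        using mult_left_le_one_le[of "\<bar>p r\<bar>" "E r"] by (simp add: abs_mult E_def)
    qed
    also have "\<dots> \<le> C" using intabs[of "d/2" d] d by simp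
    finally show ?thesis .
  qed
  have "\<bar>integral {0..d/2} (\<lambda>r. E r * p r)\<bar> \<le> 3 * C" using sp2 b2 Ab by linarith
  then show ?thesis by (simp add: E_def C_def)
qed

lemma Z_lt_le:
  assumes Z: "Zf p" and v: "\<And>x. x < a \<Longrightarrow> p x = 0"
  shows "\<And>x. x \<le> a \<Longrightarrow> p x = 0"
proof -
  have cp: "continuous_on UNIV p" using Z by (simp add: Zf_def)
  have cl: "closed {x. p x = 0}"
    using continuous_closed_preimage_constant[OF cp closed_UNIV, of 0] by simp
  have "{..<a} \<subseteq> {x. p x = 0}" using v by auto
  then have "closure {..<a} \<subseteq> {x. p x = 0}" using cl by (rule closure_minimal)
  then show "\<And>x. x \<le> a \<Longrightarrow> p x = 0" by auto
qed

lemma weakS: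
  assumes Z: "Zf p" and d: "0 < d" and vz: "\<And>t. t \<le> 2*d \<Longrightarrow> cv p p t = 0"
  shows "\<And>x. x \<le> d/2 \<Longrightarrow> p x = 0"
proof -
  have cp: "continuous_on UNIV p" using Z by (simp add: Zf_def)
  define M where "M = 3 * integral {0..2*d} (\<lambda>r. \<bar>p r\<bar>)"
  have bnd: "\<bar>integral {0..d/2} (\<lambda>v. exp (real n * v) * p (d/2 - v))\<bar> \<le> M" for n :: nat
  proof -
    have "integral {0..d/2} (\<lambda>v. exp (real n * v) * p (d/2 - v))
        = integral {0..d/2} (\<lambda>v. (\<lambda>r. exp (real n * (d/2 - r)) * p r) (d/2 - v))"
      by (rule integral_cong) simp
    also have "\<dots> = integral {0..d/2} (\<lambda>r. exp (real n * (d/2 - r)) * p r)"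
      by (rule integral_reflect_shift)
    finally show ?thesis using weakS_bound[OF Z d vz, of n] by (simp add: M_def)
  qed
  have cq: "continuous_on {0..d/2} (\<lambda>v. p (d/2 - v))"
    by (rule continuous_on_compose2[OF cp]) (auto intro!: continuous_intros)
  have q0: "\<forall>v\<in>{0..d/2}. p (d/2 - v) = 0"
    by (rule doetsch[OF _ cq bnd]) (use d in simp)
  show "p x = 0" if "x \<le> d/2" for x
  proof (cases "x \<le> 0")
    case True then show ?thesis using Z by (simp add: Zf_def)
  next
    case False
    then have "d/2 - x \<in> {0..d/2}" using that by auto
    then have "p (d/2 - (d/2 - x)) = 0" using q0 by blast
    then show ?thesis by simp
  qed
qed

lemma Zf_shift: "Zf p \<Longrightarrow> (\<And>x. x \<le> a \<Longrightarrow> p x = 0) \<Longrightarrow> 0 \<le> a \<Longrightarrow> Zf (\<lambda>x. p (x + a))"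
  unfolding Zf_def
  by (auto intro!: continuous_on_compose2[of UNIV p] continuous_intros)

lemma cv_shift:
  assumes Z: "Zf p" and v: "\<And>x. x \<le> a \<Longrightarrow> p x = 0" and a: "0 \<le> a"
  shows "cv p p (t + 2*a) = cv (\<lambda>x. p (x + a)) (\<lambda>x. p (x + a)) t"
proof (cases "t \<le> 0")
  case True
  have r: "cv (\<lambda>x. p (x + a)) (\<lambda>x. p (x + a)) t = 0"
    by (rule cv_nonpos[OF Zf_shift[OF Z v a] True])
  have "cv p p (t + 2*a) = 0"
    by (rule cv_vanish[of a p a]) (use v True in auto)
  then show ?thesis using r by simp
next
  case False
  have cp: "continuous_on UNIV p" using Z by (simp add: Zf_def)
  define F where "F = (\<lambda>u. p u * p (t + 2*a - u))"
  have iF: "F integrable_on {0..t+2*a}"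
    unfolding F_def by (rule integrable_Zf_prod[OF Z Z])
  have "cv p p (t + 2*a) = integral {0..t+2*a} F" by (simp add: cv_def F_def)
  also have "\<dots> = integral {a..t+a} F"
    by (rule int_zero_outside[OF _ _ _ iF]) (use a False v in \<open>auto simp: F_def\<close>)
  also have "\<dots> = integral {a - a..t + a - a} (\<lambda>x. F (x + a))" by (rule integral_shift_form)
  also have "\<dots> = cv (\<lambda>x. p (x + a)) (\<lambda>x. p (x + a)) t"
    by (simp add: cv_def F_def algebra_simps)
  finally show ?thesis .
qed

lemma sharpS:
  assumes Z: "Zf p" and vz: "\<And>t. t \<le> 2*c \<Longrightarrow> cv p p t = 0"
  shows "\<And>x. x \<le> c \<Longrightarrow> p x = 0"
proof (cases "c \<le> 0")
  case True
  then show "\<And>x. x \<le> c \<Longrightarrow> p x = 0" using Z by (simp add: Zf_def)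
next
  case False
  then have c0: "0 < c" by simp
  define S where "S = {a. 0 \<le> a \<and> a \<le> c \<and> (\<forall>x<a. p x = 0)}"
  define a0 where "a0 = Sup S"
  have 0: "0 \<in> S" using Z c0 by (auto simp: S_def Zf_def)
  have bdd: "bdd_above S" by (auto simp: S_def bdd_above_def)
  have ub: "r \<le> a0" if "r \<in> S" for r using cSup_upper[OF that bdd] by (simp add: a0_def)
  have a0c: "a0 \<le> c" unfolding a0_def using 0 by (intro cSup_least) (auto simp: S_def)
  have a00: "0 \<le> a0" using ub[OF 0] .
  have va0: "p x = 0" if xl: "x < a0" for x
  proof -
    obtain r where "r \<in> S" "x < r" using less_cSupD[of S x] 0 bdd xl by (auto simp: a0_def)
    then show ?thesis by (auto simp: S_def)
  qed
  have va0': "\<And>x. x \<le> a0 \<Longrightarrow> p x = 0" by (rule Z_lt_le[OF Z va0])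
  have "a0 = c"
  proof (rule ccontr)
    assume "a0 \<noteq> c"
    then have lt: "a0 < c" using a0c by simp
    define q where "q x = p (x + a0)" for x
    have Zq: "Zf q" unfolding q_def by (rule Zf_shift[OF Z va0' a00])
    have "cv q q t = 0" if "t \<le> 2 * (c - a0)" for t
    proof -
      have "cv q q t = cv p p (t + 2*a0)" unfolding q_def using cv_shift[OF Z va0' a00, of t] by simp
      also have "\<dots> = 0" using vz that by simp
      finally show ?thesis .
    qed
    then have vq: "\<And>x. x \<le> (c - a0)/2 \<Longrightarrow> q x = 0"
      using weakS[OF Zq, of "c - a0"] lt by simp
    define a1 where "a1 = a0 + (c - a0)/2"
    have "a1 \<in> S"
    proof -
      have "p x = 0" if "x < a1" for x
      proof -
        have "x - a0 \<le> (c - a0)/2" using that unfolding a1_def by linarith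
        then have "q (x - a0) = 0" by (rule vq)
        then show ?thesis by (simp add: q_def)
      qed
      moreover have "0 \<le> a1" using lt a00 by (auto simp: a1_def field_simps)
      moreover have "a1 \<le> c" using lt a00 by (auto simp: a1_def field_simps)
      ultimately show ?thesis by (auto simp: S_def)
    qed
    then have "a1 \<le> a0" by (rule ub)
    then show False using lt by (simp add: a1_def)
  qed
  then show "\<And>x. x \<le> c \<Longrightarrow> p x = 0" using va0' by simp
qed



lemma core:
  assumes ZF: "Zf F" and ZG: "Zf G"
    and sm: "\<And>t. F t + G t = t * P t"
    and Pv: "\<And>t. t \<le> a \<Longrightarrow> P t = 0"
    and Fv: "\<And>t. t \<le> b \<Longrightarrow> F t = 0"
    and FGv: "\<And>t. t \<le> a + b' \<Longrightarrow> cv F G t = 0"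
  shows "\<And>t. t \<le> (a + min b b')/2 \<Longrightarrow> F t = 0"
proof -
  have neg: "cv F F t = - cv F G t" if t: "t \<le> a + b" for t
  proof -
    have "integral {0..t} (\<lambda>u. F u * F (t - u)) = integral {0..t} (\<lambda>u. - (F u * G (t - u)))"
    proof (rule integral_cong)
      fix u assume u: "u \<in> {0..t}"
      show "F u * F (t - u) = - (F u * G (t - u))"
      proof (cases "u \<le> b")
        case True then show ?thesis using Fv by simp
      next
        case False
        then have "t - u \<le> a" using t by simp
        then have "F (t - u) = - G (t - u)" using sm[of "t - u"] Pv by simp
        then show ?thesis by simp
      qed
    qed
    then show ?thesis by (simp add: cv_def integral_neg)
  qed
  have "cv F F t = 0" if "t \<le> 2 * ((a + min b b')/2)" for t
  proof -
    have "t \<le> a + b" "t \<le> a + b'" using that by auto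
    then show ?thesis using neg FGv by simp
  qed
  then show "\<And>t. t \<le> (a + min b b')/2 \<Longrightarrow> F t = 0" by (rule sharpS[OF ZF])
qed

lemma deficit:
  fixes r :: "nat \<Rightarrow> real"
  assumes r0: "r 0 = T" and nn: "\<And>n. 0 \<le> r n" and le: "\<And>n. r n \<le> T"
    and st: "\<And>m. (r m + min (r (Suc m)) (r (Suc (Suc m))))/2 \<le> r (Suc m)"
  shows "r n = T"
proof (rule ccontr)
  assume ne: "r n \<noteq> T"
  define n0 where "n0 = (LEAST n. r n < T)"
  have ex: "r n < T" using ne le[of n] by simp
  have n0lt: "r n0 < T" unfolding n0_def by (rule LeastI[of _ n]) (rule ex)
  have n0min: "\<not> r i < T" if "i < n0" for i using not_less_Least[OF that[unfolded n0_def]] by (simp add: n0_def)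
  have "n0 \<noteq> 0"
  proof
    assume "n0 = 0"
    then show False using n0lt r0 by simp
  qed
  then obtain m0 where m0: "n0 = Suc m0" by (cases n0) auto
  have rm0: "r m0 = T" using n0min[of m0] le[of m0] m0 by simp
  define \<delta> where "\<delta> = T - r n0"
  have \<delta>0: "0 < \<delta>" using n0lt by (simp add: \<delta>_def)
  have inc: "r (m0 + i) - r (Suc m0 + i) \<ge> \<delta>" for i
  proof (induction i)
    case 0 then show ?case using rm0 m0 by (simp add: \<delta>_def)
  next
    case (Suc i)
    have s: "(r (m0 + i) + min (r (Suc (m0 + i))) (r (Suc (Suc (m0 + i)))))/2 \<le> r (Suc (m0 + i))"
      by (rule st)
    show ?case
    proof (cases "r (Suc (m0 + i)) \<le> r (Suc (Suc (m0 + i)))")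
      case True
      then have "r (m0 + i) \<le> r (Suc (m0 + i))" using s by (simp add: min_def)
      then show ?thesis using Suc.IH \<delta>0 by simp
    next
      case False
      then have "r (m0 + i) + r (Suc (Suc (m0 + i))) \<le> 2 * r (Suc (m0 + i))" using s by (simp add: min_def)
      then show ?thesis using Suc.IH by simp
    qed
  qed
  have low: "T - r (Suc m0 + i) \<ge> real (Suc i) * \<delta>" for i
  proof (induction i)
    case 0 then show ?case using inc[of 0] rm0 by simp
  next
    case (Suc i)
    have "r (m0 + Suc i) - r (Suc m0 + Suc i) \<ge> \<delta>" by (rule inc)
    moreover have "m0 + Suc i = Suc m0 + i" by simp
    ultimately show ?case using Suc.IH by (simp add: algebra_simps)
  qed
  obtain i :: nat where "T < real i * \<delta>" using reals_Archimedean3[OF \<delta>0] by blast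
  moreover have "real i * \<delta> \<le> real (Suc i) * \<delta>" using \<delta>0 by simp
  moreover have "T - r (Suc m0 + i) \<le> T" using nn by simp
  ultimately show False using low[of i] by linarith
qed

lemma pow_suc_fun: "(\<lambda>x::real. x * (x ^ j * f x)) = (\<lambda>x. x ^ Suc j * f x)"
  by (rule ext) simp

lemma bootstrap:
  assumes Zfg: "Zf f" "Zf g" and T0: "0 \<le> T" and v: "\<And>t. t \<le> T \<Longrightarrow> cv f g t = 0"
  shows "\<And>t. t \<le> T \<Longrightarrow> cv (\<lambda>x. x^j * f x) (\<lambda>x. x^k * g x) t = 0"
proof -
  define M where "M j k = cv (\<lambda>x. x^j * f x) (\<lambda>x. x^k * g x)" for j k :: nat
  have Zp: "Zf (\<lambda>x. x^j * f x)" "Zf (\<lambda>x. x^j * g x)" for j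
    using Zf_pow Zfg by auto
  have ZM: "Zf (M j k)" for j k unfolding M_def by (intro Zf_cv Zp)
  define S where "S n = {r. 0 \<le> r \<and> r \<le> T \<and> (\<forall>j k. j + k = n \<longrightarrow> (\<forall>t<r. M j k t = 0))}" for n
  define \<rho> where "\<rho> n = Sup (S n)" for n
  have S0: "0 \<in> S n" for n
    using ZM T0 by (auto simp: S_def Zf_def)
  have bdd: "bdd_above (S n)" for n by (auto simp: S_def bdd_above_def)
  have \<rho>ub: "x \<le> \<rho> n" if "x \<in> S n" for x n
    using cSup_upper[OF that bdd] by (simp add: \<rho>_def)
  have \<rho>le: "\<rho> n \<le> T" for n
  proof -
    have "S n \<noteq> {}" using S0[of n] by blast
    then show ?thesis unfolding \<rho>_def by (rule cSup_least) (auto simp: S_def)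
  qed
  have \<rho>0: "0 \<le> \<rho> n" for n using \<rho>ub[OF S0] .
  have \<rho>lt: "M j k t = 0" if jkn: "j + k = n" and tl: "t < \<rho> n" for j k n t
  proof -
    obtain r where "r \<in> S n" "t < r" using less_cSupD[of "S n" t] S0 bdd tl by (auto simp: \<rho>_def)
    then show ?thesis using jkn by (auto simp: S_def)
  qed
  have \<rho>in: "M j k t = 0" if "j + k = n" "t \<le> \<rho> n" for j k n t
    using Z_lt_le[OF ZM, of "\<rho> n" j k t] \<rho>lt[OF that(1)] that(2) by blast
  have T00: "T \<in> S 0"
  proof -
    have "M 0 0 t = 0" if "t < T" for t using v that by (simp add: M_def)
    then show ?thesis using T0 by (auto simp: S_def)
  qed
  have \<rho>00: "\<rho> 0 = T" using \<rho>ub[OF T00] \<rho>le[of 0] by simp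
  have step: "(\<rho> m + min (\<rho> (Suc m)) (\<rho> (Suc (Suc m))))/2 \<le> \<rho> (Suc m)" for m
  proof -
    define X where "X = (\<rho> m + min (\<rho> (Suc m)) (\<rho> (Suc (Suc m))))/2"
    have X0: "0 \<le> X" using \<rho>0 by (simp add: X_def min_def)
    have XT: "X \<le> T" using \<rho>le[of m] \<rho>le[of "Suc m"] \<rho>le[of "Suc (Suc m)"] by (simp add: X_def min_def)
    have van: "M j k t = 0" if jk: "j + k = Suc m" and t: "t \<le> X" for j k t
    proof (cases j)
      case (Suc j')
      have jk': "j' + k = m" using jk Suc by simp
      have sm: "M (Suc j') k t + M j' (Suc k) t = t * M j' k t" for t
        using cv_tmul[OF Zp(1)[of j'] Zp(2)[of k], of t] by (simp add: M_def pow_suc_fun)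
      have FG: "cv (M (Suc j') k) (M j' (Suc k)) = cv (M (Suc j') (Suc k)) (M j' k)"
        unfolding M_def by (rule cv_four) (intro Zp)+
      have FGv: "cv (M (Suc j') k) (M j' (Suc k)) t = 0" if "t \<le> \<rho> m + \<rho> (Suc (Suc m))" for t
        unfolding FG
        by (rule cv_vanish[of "\<rho> (Suc (Suc m))" _ "\<rho> m"])
           (use that jk' \<rho>in in auto)
      have "M (Suc j') k t = 0"
        by (rule core[OF ZM ZM sm, of "\<rho> m" "\<rho> (Suc m)" "\<rho> (Suc (Suc m))"])
           (use jk' jk Suc \<rho>in FGv t in \<open>auto simp: X_def\<close>)
      then show ?thesis using Suc by simp
    next
      case 0
      then obtain k' where k': "k = Suc k'" using jk by (cases k) auto
      have km: "k' = m" using jk 0 k' by simp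
      have sm: "M 0 (Suc k') t + M 1 k' t = t * M 0 k' t" for t
        using cv_tmul[OF Zp(1)[of 0] Zp(2)[of k'], of t] by (simp add: M_def pow_suc_fun)
      have FG: "cv (M 0 (Suc k')) (M 1 k') = cv (M 0 k') (M 1 (Suc k'))"
        unfolding M_def by (rule cv_four) (intro Zp)+
      have FGv: "cv (M 0 (Suc k')) (M 1 k') t = 0" if "t \<le> \<rho> m + \<rho> (Suc (Suc m))" for t
        unfolding FG
        by (rule cv_vanish[of "\<rho> m" _ "\<rho> (Suc (Suc m))"])
           (use that km \<rho>in in auto)
      have "M 0 (Suc k') t = 0"
        by (rule core[OF ZM ZM sm, of "\<rho> m" "\<rho> (Suc m)" "\<rho> (Suc (Suc m))"])
           (use km \<rho>in FGv t in \<open>auto simp: X_def\<close>)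
      then show ?thesis using 0 k' by simp
    qed
    have "X \<in> S (Suc m)"
      using X0 XT van by (auto simp: S_def)
    then have "X \<le> \<rho> (Suc m)" by (rule \<rho>ub)
    then show ?thesis by (simp only: X_def)
  qed
  have all: "\<rho> n = T" for n
    by (rule deficit[of \<rho> T n, OF \<rho>00 \<rho>0 \<rho>le step])
  show "\<And>t. t \<le> T \<Longrightarrow> cv (\<lambda>x. x^j * f x) (\<lambda>x. x^k * g x) t = 0"
    using \<rho>in[of j k "j + k"] all by (simp add: M_def)
qed



lemma moments_zero:
  fixes \<phi> :: "real \<Rightarrow> real"
  assumes t: "0 < t" and c: "continuous_on {0..t} \<phi>"
    and m: "\<And>k. integral {0..t} (\<lambda>s. s^k * \<phi> s) = 0"
  shows "\<forall>s\<in>{0..t}. \<phi> s = 0"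
proof -
  have poly: "integral {0..t} (\<lambda>s. (\<Sum>i\<le>n. a i * s^i) * \<phi> s) = 0" for a n
  proof -
    have "integral {0..t} (\<lambda>s. (\<Sum>i\<le>n. a i * s^i) * \<phi> s) = integral {0..t} (\<lambda>s. \<Sum>i\<le>n. a i * (s^i * \<phi> s))"
      by (simp add: sum_distrib_right mult.assoc)
    also have "\<dots> = (\<Sum>i\<le>n. integral {0..t} (\<lambda>s. a i * (s^i * \<phi> s)))"
      by (rule integral_sum) (auto intro!: integrable_continuous_real continuous_intros c)
    also have "\<dots> = 0" by (simp add: m)
    finally show ?thesis .
  qed
  define K where "K = integral {0..t} (\<lambda>s. \<bar>\<phi> s\<bar>)"
  have K0: "0 \<le> K" unfolding K_def
    by (rule integral_nonneg) (auto intro!: integrable_continuous_real continuous_intros c)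
  have sq: "integral {0..t} (\<lambda>s. \<phi> s * \<phi> s) \<le> e * K" if e: "0 < e" for e
  proof -
    obtain p where rp: "real_polynomial_function p" and ap: "\<And>x. x \<in> {0..t} \<Longrightarrow> \<bar>\<phi> x - p x\<bar> < e"
      using Stone_Weierstrass_real_polynomial_function[OF compact_Icc c e] by blast
    obtain a n where pa: "p = (\<lambda>x. \<Sum>i\<le>n. a i * x^i)" using rp real_polynomial_function_iff_sum by blast
    have cpp: "continuous_on {0..t} p" unfolding pa by (intro continuous_intros)
    have i1: "(\<lambda>s. \<phi> s * (\<phi> s - p s)) integrable_on {0..t}"
      by (intro integrable_continuous_real continuous_intros c cpp)
    have i2: "(\<lambda>s. p s * \<phi> s) integrable_on {0..t}"
      by (intro integrable_continuous_real continuous_intros c cpp)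
    have e1: "integral {0..t} (\<lambda>s. \<phi> s * \<phi> s) = integral {0..t} (\<lambda>s. \<phi> s * (\<phi> s - p s)) + integral {0..t} (\<lambda>s. p s * \<phi> s)"
    proof -
      have "integral {0..t} (\<lambda>s. \<phi> s * \<phi> s) = integral {0..t} (\<lambda>s. \<phi> s * (\<phi> s - p s) + p s * \<phi> s)"
        by (rule integral_cong) (simp add: algebra_simps)
      then show ?thesis using integral_add[OF i1 i2] by simp
    qed
    have e2: "integral {0..t} (\<lambda>s. p s * \<phi> s) = 0" using poly[of a n] by (simp add: pa)
    have e3: "integral {0..t} (\<lambda>s. \<phi> s * (\<phi> s - p s)) \<le> integral {0..t} (\<lambda>s. e * \<bar>\<phi> s\<bar>)"
    proof (rule integral_le[OF i1])
      show "(\<lambda>s. e * \<bar>\<phi> s\<bar>) integrable_on {0..t}"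
        by (intro integrable_continuous_real continuous_intros c)
      fix s assume s: "s \<in> {0..t}"
      have "\<phi> s * (\<phi> s - p s) \<le> \<bar>\<phi> s\<bar> * \<bar>\<phi> s - p s\<bar>" by (simp add: abs_mult[symmetric])
      also have "\<dots> \<le> \<bar>\<phi> s\<bar> * e" using ap[OF s] by (intro mult_left_mono) auto
      finally show "\<phi> s * (\<phi> s - p s) \<le> e * \<bar>\<phi> s\<bar>" by (simp add: mult.commute)
    qed
    have "integral {0..t} (\<lambda>s. e * \<bar>\<phi> s\<bar>) = e * K" by (simp add: K_def)
    then show ?thesis using e1 e2 e3 by linarith
  qed
  have le0: "integral {0..t} (\<lambda>s. \<phi> s * \<phi> s) \<le> 0"
  proof (rule field_le_epsilon)
    fix e :: real assume e: "0 < e"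
    have "integral {0..t} (\<lambda>s. \<phi> s * \<phi> s) \<le> (e / (K + 1)) * K" using sq[of "e / (K + 1)"] e K0 by simp
    also have "\<dots> \<le> e" using e K0 by (simp add: field_simps)
    finally show "integral {0..t} (\<lambda>s. \<phi> s * \<phi> s) \<le> 0 + e" by simp
  qed
  have ge0: "0 \<le> integral {0..t} (\<lambda>s. \<phi> s * \<phi> s)"
    by (rule integral_nonneg) (auto intro!: integrable_continuous_real continuous_intros c)
  have hi: "((\<lambda>s. \<phi> s * \<phi> s) has_integral 0) (cbox 0 t)"
  proof -
    have "(\<lambda>s. \<phi> s * \<phi> s) integrable_on {0..t}"
      by (intro integrable_continuous_real continuous_intros c)
    then have "((\<lambda>s. \<phi> s * \<phi> s) has_integral integral {0..t} (\<lambda>s. \<phi> s * \<phi> s)) {0..t}"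
      by (rule integrable_integral)
    then show ?thesis using le0 ge0 by (simp add: box_real)
  qed
  show ?thesis
  proof
    fix s assume s: "s \<in> {0..t}"
    have "\<phi> s * \<phi> s = 0"
    proof (rule has_integral_0_cbox_imp_0[OF _ _ hi])
      show "continuous_on (cbox 0 t) (\<lambda>s. \<phi> s * \<phi> s)" using c by (simp add: box_real continuous_intros)
      show "\<And>x. x \<in> box 0 t \<Longrightarrow> 0 \<le> \<phi> x * \<phi> x" by simp
      show "box 0 t \<noteq> {}" using t by (simp add: box_real)
      show "s \<in> cbox 0 t" using s by (simp add: box_real)
    qed
    then show "\<phi> s = 0" by simp
  qed
qed

lemma titchmarsh_onesided:
  assumes Zfg: "Zf f" "Zf g" and T0: "0 \<le> T" and v: "\<And>t. t \<le> T \<Longrightarrow> cv f g t = 0"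
    and nz: "\<And>e. 0 < e \<Longrightarrow> \<exists>s. 0 < s \<and> s < e \<and> f s \<noteq> 0"
  shows "\<And>x. x \<le> T \<Longrightarrow> g x = 0"
proof -
  have mom: "cv (\<lambda>x. x^j * f x) g t = 0" if "t \<le> T" for j t
    using bootstrap[OF Zfg T0 v, of t j 0] that by simp
  have pw: "f s * g (t - s) = 0" if t: "0 < t" "t \<le> T" and s: "s \<in> {0..t}" for t s
  proof -
    have c: "continuous_on {0..t} (\<lambda>s. f s * g (t - s))" by (rule Zf_prod_cont[OF Zfg])
    have "integral {0..t} (\<lambda>s. s^k * (f s * g (t - s))) = 0" for k
      using mom[of t k] t by (simp add: cv_def mult.assoc)
    then show ?thesis using moments_zero[OF t(1) c] s by blast
  qed
  have lt: "g x = 0" if xT: "x < T" for x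
  proof (cases "x \<le> 0")
    case True then show ?thesis using Zfg(2) by (simp add: Zf_def)
  next
    case False
    obtain s where s: "0 < s" "s < T - x" "f s \<noteq> 0" using nz[of "T - x"] xT by auto
    have "f s * g (x + s - s) = 0" by (rule pw) (use s False in auto)
    then show ?thesis using s by simp
  qed
  show "\<And>x. x \<le> T \<Longrightarrow> g x = 0" by (rule Z_lt_le[OF Zfg(2) lt])
qed



lemma holder_cont:
  assumes h: "holder_continuous_on \<alpha> S f" and a: "0 < \<alpha>"
  shows "continuous_on S f"
proof -
  obtain C where C: "\<forall>x\<in>S. \<forall>y\<in>S. \<bar>f x - f y\<bar> \<le> C * \<bar>x - y\<bar> powr \<alpha>"
    using h by (auto simp: holder_continuous_on_def)
  show ?thesis unfolding continuous_on_iff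
  proof (intro ballI allI impI)
    fix x e assume x: "x \<in> S" and e: "(0::real) < e"
    define d where "d = (e / (\<bar>C\<bar> + 1)) powr (1/\<alpha>)"
    have d0: "0 < d" using e by (simp add: d_def)
    have "\<forall>x'\<in>S. dist x' x < d \<longrightarrow> dist (f x') (f x) < e"
    proof (intro ballI impI)
      fix x' assume x'S: "x' \<in> S" and x'd: "dist x' x < d"
      have "\<bar>x' - x\<bar> powr \<alpha> < d powr \<alpha>"
        using x'd a by (intro powr_less_mono2) (auto simp: dist_real_def)
      also have "d powr \<alpha> = e / (\<bar>C\<bar> + 1)" using e a by (simp add: d_def powr_powr)
      finally have lt: "\<bar>x' - x\<bar> powr \<alpha> < e / (\<bar>C\<bar> + 1)" .
      have "\<bar>f x' - f x\<bar> \<le> C * \<bar>x' - x\<bar> powr \<alpha>" using C x x'S by auto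
      also have "\<dots> \<le> \<bar>C\<bar> * \<bar>x' - x\<bar> powr \<alpha>" by (intro mult_right_mono) auto
      also have "\<dots> \<le> \<bar>C\<bar> * (e / (\<bar>C\<bar> + 1))" using lt by (intro mult_left_mono) auto
      also have "\<dots> < e"
      proof -
        have "\<bar>C\<bar> * (e / (\<bar>C\<bar> + 1)) = e * (\<bar>C\<bar> / (\<bar>C\<bar> + 1))" by simp
        also have "\<dots> < e * 1" using e by (intro mult_strict_left_mono) auto
        finally show ?thesis by simp
      qed
      finally show "dist (f x') (f x) < e" by (simp add: dist_real_def)
    qed
    then show "\<exists>d>0. \<forall>x'\<in>S. dist x' x < d \<longrightarrow> dist (f x') (f x) < e" using d0 by blast
  qed
qed

lemma prod_absint:
  fixes \<phi> k :: "real \<Rightarrow> real"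
  assumes c: "continuous_on {a..b} \<phi>" and k: "k absolutely_integrable_on {a..b}"
  shows "(\<lambda>x. \<phi> x * k x) absolutely_integrable_on {a..b}"
proof -
  have m: "\<phi> \<in> borel_measurable (lebesgue_on {a..b})"
    by (rule continuous_imp_measurable_on_sets_lebesgue[OF c]) simp
  have bd: "bounded (\<phi> ` {a..b})"
    by (rule compact_imp_bounded[OF compact_continuous_image[OF c compact_Icc]])
  show ?thesis
    using absolutely_integrable_bounded_measurable_product[OF bilinear_times m _ bd k] by simp
qed

lemma prod_int:
  fixes \<phi> k :: "real \<Rightarrow> real"
  assumes c: "continuous_on {a..b} \<phi>" and k: "k absolutely_integrable_on {a..b}"
  shows "(\<lambda>x. \<phi> x * k x) integrable_on {a..b}"
  using prod_absint[OF c k] by (simp add: absolutely_integrable_on_def)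

lemma absint_bound:
  fixes \<phi> k :: "real \<Rightarrow> real"
  assumes c: "continuous_on {a..b} \<phi>" and k: "k absolutely_integrable_on {a..b}"
    and B: "\<And>x. x \<in> {a..b} \<Longrightarrow> \<bar>\<phi> x\<bar> \<le> B"
  shows "\<bar>integral {a..b} (\<lambda>x. \<phi> x * k x)\<bar> \<le> B * integral {a..b} (\<lambda>x. \<bar>k x\<bar>)"
proof -
  have ka: "(\<lambda>x. \<bar>k x\<bar>) integrable_on {a..b}" using k by (simp add: absolutely_integrable_on_def)
  have "\<bar>integral {a..b} (\<lambda>x. \<phi> x * k x)\<bar> \<le> integral {a..b} (\<lambda>x. B * \<bar>k x\<bar>)"
  proof (rule abs_int_bound[OF prod_int[OF c k]])
    show "(\<lambda>x. B * \<bar>k x\<bar>) integrable_on {a..b}" using ka by (rule integrable_on_mult_right)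
    fix x assume x: "x \<in> {a..b}"
    show "\<bar>\<phi> x * k x\<bar> \<le> B * \<bar>k x\<bar>" using B[OF x] by (simp add: abs_mult mult_right_mono)
  qed
  then show ?thesis by simp
qed

lemma riemann_imp_integrable:
  assumes "riemann_integrable_on g 0 1"
  shows "g integrable_on {0..1}"
proof -
  obtain I where I: "\<forall>e>0. \<exists>\<delta>>0. \<forall>p. p tagged_division_of {0..1} \<and> (\<lambda>x. ball x \<delta>) fine p \<longrightarrow>
        \<bar>(\<Sum>(x,K)\<in>p. Henstock_Kurzweil_Integration.content K * g x) - I\<bar> < e"
    using assms by (auto simp: riemann_integrable_on_def)
  have "(g has_integral I) (cbox 0 1)"
    unfolding has_integral
  proof (intro allI impI)
    fix e :: real assume e: "0 < e"
    from I[rule_format, OF e] obtain \<delta> where d: "\<delta> > 0" and dp: "\<forall>p. p tagged_division_of {0..1} \<and> (\<lambda>x. ball x \<delta>) fine p \<longrightarrow>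
        \<bar>(\<Sum>(x,K)\<in>p. Henstock_Kurzweil_Integration.content K * g x) - I\<bar> < e"
      by (elim exE conjE) (rule that)
    show "\<exists>\<gamma>. gauge \<gamma> \<and> (\<forall>\<D>. \<D> tagged_division_of cbox 0 1 \<and> \<gamma> fine \<D> \<longrightarrow>
          norm ((\<Sum>(x, k)\<in>\<D>. Henstock_Kurzweil_Integration.content k *\<^sub>R g x) - I) < e)"
    proof (rule exI[of _ "\<lambda>x. ball x \<delta>"], intro conjI allI impI)
      show "gauge (\<lambda>x. ball x \<delta>)" using d by (rule gauge_ball)
      fix D :: "(real \<times> real set) set" assume D: "D tagged_division_of cbox 0 1 \<and> (\<lambda>x. ball x \<delta>) fine D"
      then have "\<bar>(\<Sum>(x,K)\<in>D. Henstock_Kurzweil_Integration.content K * g x) - I\<bar> < e"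
        using dp by (simp add: box_real)
      then show "norm ((\<Sum>(x, k)\<in>D. Henstock_Kurzweil_Integration.content k *\<^sub>R g x) - I) < e"
        by simp
    qed
  qed
  then show ?thesis by (auto simp: box_real integrable_on_def)
qed

lemma interval_inner:
  fixes I :: "real set"
  assumes "is_interval I" "I \<noteq> {}" "bdd_below I" "bdd_above I"
  shows "{Inf I<..<Sup I} \<subseteq> I"
proof
  fix y assume y: "y \<in> {Inf I<..<Sup I}"
  obtain a where a: "a \<in> I" "a < y" using y cInf_less_iff[OF assms(2,3)] by auto
  obtain b where b: "b \<in> I" "y < b" using y less_cSup_iff[OF assms(2,4)] by auto
  show "y \<in> I" using assms(1) a b unfolding is_interval_1 by (meson less_imp_le)
qed

lemma dense_zero:
  fixes k :: "real \<Rightarrow> real"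
  assumes I: "is_interval I" "a \<in> I" "b \<in> I" "a < b" and ck: "continuous_on I k"
    and E: "finite E" and z: "\<And>y. y \<in> I \<Longrightarrow> y \<notin> E \<Longrightarrow> k y = 0" and x: "x \<in> I"
  shows "k x = 0"
proof (rule ccontr)
  assume kx: "k x \<noteq> 0"
  obtain d where d: "d > 0" and dd: "\<And>x'. x' \<in> I \<Longrightarrow> dist x' x < d \<Longrightarrow> dist (k x') (k x) < \<bar>k x\<bar>"
    using ck x kx unfolding continuous_on_iff by (metis zero_less_abs_iff)
  have nz: "k y \<noteq> 0" if "y \<in> I" "\<bar>y - x\<bar> < d" for y
    using dd[of y] that by (auto simp: dist_real_def)
  obtain c c' where cc: "c < c'" "{c..c'} \<subseteq> I" "\<And>y. y \<in> {c..c'} \<Longrightarrow> \<bar>y - x\<bar> < d"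
  proof (cases "x < b")
    case True
    show ?thesis
    proof (rule that[of x "min b (x + d/2)"])
      show "x < min b (x + d/2)" unfolding min_less_iff_conj using True d by linarith
      show "{x..min b (x + d/2)} \<subseteq> I"
      proof
        fix y assume "y \<in> {x..min b (x + d/2)}"
        then have "x \<le> y" "y \<le> b" by auto
        then show "y \<in> I" using I(1) x I(3) unfolding is_interval_1 by blast
      qed
      show "\<And>y. y \<in> {x..min b (x + d/2)} \<Longrightarrow> \<bar>y - x\<bar> < d" using d by auto
    qed
  next
    case False
    then have "a < x" using I(4) by simp
    show ?thesis
    proof (rule that[of "max a (x - d/2)" x])
      show "max a (x - d/2) < x" unfolding max_less_iff_conj using \<open>a < x\<close> d by linarith
      show "{max a (x - d/2)..x} \<subseteq> I"
      proof
        fix y assume "y \<in> {max a (x - d/2)..x}"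
        then have "a \<le> y" "y \<le> x" by auto
        then show "y \<in> I" using I(1) x I(2) unfolding is_interval_1 by blast
      qed
      show "\<And>y. y \<in> {max a (x - d/2)..x} \<Longrightarrow> \<bar>y - x\<bar> < d" using d by auto
    qed
  qed
  have "infinite ({c..c'} - E)" using infinite_Icc[OF cc(1)] E by (rule Diff_infinite_finite[rotated])
  then obtain y where y: "y \<in> {c..c'}" "y \<notin> E" by (metis Diff_iff finite.emptyI infinite_imp_nonempty ex_in_conv)
  then have "k y = 0" using z cc(2) by auto
  moreover have "k y \<noteq> 0" using nz[of y] y cc by auto
  ultimately show False by simp
qed



theorem proposition3p1:
  fixes g h :: "real \<Rightarrow> real" and \<alpha> :: real
  assumes g_nonconst: "\<exists>x\<in>{0..1}. \<exists>y\<in>{0..1}. g x \<noteq> g y"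
    and g_bounded: "bounded (g ` {0..1})"
    and g_riemann: "riemann_integrable_on g 0 1"
    and g_pc: "piecewise_continuous_on g 0 1"
    and g0: "g 0 = 0"
    and h_nonconst: "\<exists>x\<in>{-1..1}. \<exists>y\<in>{-1..1}. h x \<noteq> h y"
    and h_neg: "\<forall>x\<in>{-1..0}. h x = 0"
    and h_bv: "bounded_variation_on h (-1) 1"
    and alpha_pos: "\<alpha> > 0"
    and h_holder: "holder_continuous_on \<alpha> {0..1} h"
    and h_inf: "Inf {x\<in>{-1..1}. h x \<noteq> 0} = 0"
  shows "(SUP t\<in>{0..1}. \<bar>integral {0..1} (\<lambda>x. h (x - t) * g x)
            - integral {0..1} g * integral {0..1} (\<lambda>x. h (x - t))\<bar>) > 0"
proof (rule ccontr)
  assume nsup: "\<not> (SUP t\<in>{0..1}. \<bar>integral {0..1} (\<lambda>x. h (x - t) * g x)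
            - integral {0..1} g * integral {0..1} (\<lambda>x. h (x - t))\<bar>) > 0"
  have hc: "continuous_on {0..1} h" by (rule holder_cont[OF h_holder alpha_pos])
  define hh where "hh = (\<lambda>x. h (max 0 (min x 1)))"
  have cl: "continuous_on UNIV (\<lambda>x::real. max 0 (min x 1))" by (intro continuous_intros)
  have hh_cont: "continuous_on UNIV hh"
    unfolding hh_def by (rule continuous_on_compose2[OF hc cl]) auto
  have h00: "h 0 = 0" using h_neg by auto
  have Zhh: "Zf hh" unfolding Zf_def using hh_cont h00 by (auto simp: hh_def)
  have hh_eq: "hh y = h y" if y: "y \<in> {-1..1}" for y
  proof (cases "y \<le> 0")
    case True
    then have "h y = 0" using h_neg y by auto
    then show ?thesis using True h00 by (simp add: hh_def)
  next
    case False
    then show ?thesis using y by (simp add: hh_def)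
  qed
  obtain Bh where Bh: "\<And>y. \<bar>hh y\<bar> \<le> Bh"
  proof -
    have "bounded (h ` {0..1})" by (rule compact_imp_bounded[OF compact_continuous_image[OF hc compact_Icc]])
    then obtain B where B: "\<forall>z\<in>h ` {0..1}. norm z \<le> B" by (auto simp: bounded_iff)
    have "\<bar>hh y\<bar> \<le> B" for y
    proof -
      have "max 0 (min y 1) \<in> {0..1}" by auto
      then show ?thesis using B by (auto simp: hh_def)
    qed
    then show ?thesis by (rule that)
  qed
  have chh: "continuous_on S (\<lambda>x. hh (x - t))" for S t
    by (rule continuous_on_compose2[OF hh_cont]) (auto intro!: continuous_intros)
  have nz: "\<exists>s. 0 < s \<and> s < e \<and> hh s \<noteq> 0" if e: "0 < e" for e
  proof -
    define S where "S = {x \<in> {-1..1}. h x \<noteq> 0}"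
    have I0: "Inf S = 0" using h_inf by (simp add: S_def)
    have Sne: "S \<noteq> {}"
    proof -
      obtain x y where xy: "x \<in> {-1..1}" "y \<in> {-1..1}" "h x \<noteq> h y" using h_nonconst by blast
      show ?thesis
      proof (cases "h x = 0")
        case True
        then have "y \<in> S" using xy by (auto simp: S_def)
        then show ?thesis by blast
      next
        case False
        then have "x \<in> S" using xy by (auto simp: S_def)
        then show ?thesis by blast
      qed
    qed
    have bdd: "bdd_below S" by (rule bdd_belowI[of _ "-1"]) (auto simp: S_def)
    have "Inf S < e" using I0 e by simp
    then obtain s where s: "s \<in> S" "s < e" using cInf_less_iff[OF Sne bdd] by auto
    have s0: "0 < s"
    proof (rule ccontr)
      assume "\<not> 0 < s"
      then have "s \<in> {-1..0}" using s(1) by (auto simp: S_def)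
      then show False using h_neg s(1) by (auto simp: S_def)
    qed
    moreover have "hh s \<noteq> 0" using s(1) hh_eq by (auto simp: S_def)
    ultimately show ?thesis using s(2) by blast
  qed
  have gi: "g integrable_on {0..1}" by (rule riemann_imp_integrable[OF g_riemann])
  obtain Bg where Bg: "\<And>x. x \<in> {0..1} \<Longrightarrow> \<bar>g x\<bar> \<le> Bg"
  proof -
    obtain a where "\<forall>z\<in>g ` {0..1}. norm z \<le> a" using g_bounded by (auto simp: bounded_iff)
    then have "\<And>x. x \<in> {0..1} \<Longrightarrow> \<bar>g x\<bar> \<le> a" by auto
    then show ?thesis by (rule that)
  qed
  have gm: "g \<in> borel_measurable (lebesgue_on {0..1})" by (rule integrable_imp_measurable[OF gi])
  have gabs: "g absolutely_integrable_on {0..1}"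
    by (rule measurable_bounded_by_integrable_imp_absolutely_integrable[OF gm, of "\<lambda>_. Bg"]) (use Bg in auto)
  define G where "G = integral {0..1} g"
  define k where "k = (\<lambda>x. g x - G)"
  have km: "k \<in> borel_measurable (lebesgue_on {0..1})"
    unfolding k_def by (intro borel_measurable_diff gm borel_measurable_const)
  have kb: "norm (k x) \<le> Bg + \<bar>G\<bar>" if x: "x \<in> {0..1}" for x
  proof -
    have "\<bar>g x - G\<bar> \<le> \<bar>g x\<bar> + \<bar>G\<bar>" by (rule abs_triangle_ineq4)
    then show ?thesis using Bg[OF x] by (simp add: k_def)
  qed
  have kabs: "k absolutely_integrable_on {0..1}"
    by (rule measurable_bounded_by_integrable_imp_absolutely_integrable[OF km, of "\<lambda>_. Bg + \<bar>G\<bar>"])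
       (use kb in auto)
  have ki: "k integrable_on {0..1}" using kabs by (simp add: absolutely_integrable_on_def)
  define Kk where "Kk = integral {0..1} (\<lambda>x. \<bar>k x\<bar>)"
  have Kk0: "0 \<le> Kk"
    unfolding Kk_def by (rule integral_nonneg) (use kabs in \<open>auto simp: absolutely_integrable_on_def\<close>)
  define D where "D = (\<lambda>t. integral {0..1} (\<lambda>x. hh (x - t) * k x))"
  have Deq: "\<bar>integral {0..1} (\<lambda>x. h (x - t) * g x) - integral {0..1} g * integral {0..1} (\<lambda>x. h (x - t))\<bar> = \<bar>D t\<bar>"
    if t: "t \<in> {0..1}" for t :: real
  proof -
    have e1: "integral {0..1} (\<lambda>x. h (x - t) * g x) = integral {0..1} (\<lambda>x. hh (x - t) * g x)"
    proof (rule integral_cong)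
      fix x :: real assume "x \<in> {0..1}"
      then have "x - t \<in> {-1..1}" using t by auto
      then show "h (x - t) * g x = hh (x - t) * g x" using hh_eq by simp
    qed
    have e2: "integral {0..1} (\<lambda>x. h (x - t)) = integral {0..1} (\<lambda>x. hh (x - t))"
    proof (rule integral_cong)
      fix x :: real assume "x \<in> {0..1}"
      then have "x - t \<in> {-1..1}" using t by auto
      then show "h (x - t) = hh (x - t)" using hh_eq by simp
    qed
    have i1: "(\<lambda>x. hh (x - t) * g x) integrable_on {0..1}" by (rule prod_int[OF chh gabs])
    have i2: "(\<lambda>x. hh (x - t) * G) integrable_on {0..1}"
      by (rule integrable_continuous_real) (intro continuous_on_mult[OF chh continuous_on_const])
    have "D t = integral {0..1} (\<lambda>x. hh (x - t) * g x - hh (x - t) * G)"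
      by (simp add: D_def k_def algebra_simps)
    also have "\<dots> = integral {0..1} (\<lambda>x. hh (x - t) * g x) - G * integral {0..1} (\<lambda>x. hh (x - t))"
      using integral_diff[OF i1 i2] by simp
    finally show ?thesis using e1 e2 by (simp add: G_def)
  qed
  have Dbd: "\<bar>D t\<bar> \<le> Bh * Kk" for t :: real
    unfolding D_def Kk_def by (rule absint_bound[OF chh kabs]) (use Bh in auto)
  have D0: "D t = 0" if t: "t \<in> {0..1}" for t :: real
  proof -
    define F where "F = (\<lambda>t. \<bar>integral {0..1} (\<lambda>x. h (x - t) * g x) - integral {0..1} g * integral {0..1} (\<lambda>x. h (x - t))\<bar>)"
    have bdd: "bdd_above (F ` {0..1})"
      by (rule bdd_aboveI[of _ "Bh * Kk"]) (use Deq Dbd in \<open>auto simp: F_def\<close>)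
    have "F t \<le> (SUP t\<in>{0..1}. F t)" by (rule cSUP_upper[OF t bdd])
    also have "\<dots> \<le> 0" using nsup by (simp add: F_def)
    finally show ?thesis using Deq[OF t] by (simp add: F_def)
  qed
  define H where "H = (\<lambda>y. integral {-3..y} hh)"
  have DH: "(H has_real_derivative hh y) (at y)" if y: "y \<in> {-3<..<3}" for y
  proof -
    have "(H has_real_derivative hh y) (at y within {-3..3})"
      unfolding H_def by (rule integral_has_real_derivative) (use y continuous_on_subset[OF hh_cont] in auto)
    then show ?thesis using y at_within_Icc_at[of "-3" y 3] by simp
  qed
  have H0: "H y = 0" if y: "y \<in> {-3..0}" for y
  proof -
    have "integral {-3..y} hh = integral {-3..y} (\<lambda>_. 0::real)"
      by (rule integral_cong) (use y Zhh in \<open>auto simp: Zf_def\<close>)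
    then show ?thesis by (simp add: H_def)
  qed
  have Hc: "continuous_on {-3<..<3} H"
    by (rule continuous_at_imp_continuous_on) (use DH DERIV_isCont in blast)
  have cHt: "continuous_on {0..1} (\<lambda>x. H (x - t))" if t: "t \<in> {0..1}" for t :: real
    by (rule continuous_on_compose2[OF Hc]) (use t in \<open>auto intro!: continuous_intros\<close>)
  define \<Psi> where "\<Psi> = (\<lambda>t. integral {0..1} (\<lambda>x. H (x - t) * k x))"
  have uc: "uniformly_continuous_on {-1..1} hh"
    by (rule compact_uniformly_continuous[OF continuous_on_subset[OF hh_cont] compact_Icc]) simp
  have mvt: "\<exists>\<xi>. \<xi> \<in> {-1..1} \<and> \<bar>\<xi> - b\<bar> \<le> \<bar>a - b\<bar> \<and> H a - H b = (a - b) * hh \<xi>"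
    if ab: "a \<in> {-1..1}" "b \<in> {-1..1}" "a \<noteq> b" for a b
  proof (cases "a < b")
    case True
    have "\<And>x. a \<le> x \<Longrightarrow> x \<le> b \<Longrightarrow> (H has_real_derivative hh x) (at x)"
      using DH ab by auto
    then obtain z where z: "a < z" "z < b" "H b - H a = (b - a) * hh z"
      using MVT2[OF True, of H hh] by blast
    show ?thesis
      by (rule exI[of _ z]) (use z ab in \<open>auto simp: algebra_simps\<close>)
  next
    case False
    then have ba: "b < a" using ab by simp
    have "\<And>x. b \<le> x \<Longrightarrow> x \<le> a \<Longrightarrow> (H has_real_derivative hh x) (at x)"
      using DH ab by auto
    then obtain z where z: "b < z" "z < a" "H a - H b = (a - b) * hh z"
      using MVT2[OF ba, of H hh] by blast
    show ?thesis
      by (rule exI[of _ z]) (use z ab in \<open>auto simp: algebra_simps\<close>)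
  qed
  have \<Psi>d: "(\<Psi> has_field_derivative 0) (at t within {0..1})" if t: "t \<in> {0..1}" for t :: real
    unfolding has_field_derivative_iff Lim_within
  proof (intro allI impI)
    fix \<epsilon> :: real assume \<epsilon>: "0 < \<epsilon>"
    define e' where "e' = \<epsilon> / (Kk + 1)"
    have e': "0 < e'" using \<epsilon> Kk0 by (simp add: e'_def)
    obtain \<eta> where \<eta>: "\<eta> > 0" and \<eta>p: "\<forall>x\<in>{-1..1}. \<forall>x'\<in>{-1..1}. dist x' x < \<eta> \<longrightarrow> dist (hh x') (hh x) < e'"
      using uc e' unfolding uniformly_continuous_on_def by blast
    show "\<exists>\<delta>>0. \<forall>t'\<in>{0..1}. 0 < dist t' t \<and> dist t' t < \<delta> \<longrightarrow> dist ((\<Psi> t' - \<Psi> t) / (t' - t)) 0 < \<epsilon>"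
    proof (rule exI[of _ \<eta>], intro conjI ballI impI)
      show "0 < \<eta>" by (rule \<eta>)
      fix t' assume t': "t' \<in> {0..1}" and dt: "0 < dist t' t \<and> dist t' t < \<eta>"
      have tt: "t' - t \<noteq> 0" using dt by simp
      define q where "q = (\<lambda>x. (1 / (t' - t)) * (H (x - t') - H (x - t)) + hh (x - t))"
      have cq: "continuous_on {0..1} q"
        unfolding q_def by (intro continuous_on_add continuous_on_mult continuous_on_diff continuous_on_const cHt t t' chh)
      have qb: "\<bar>q x\<bar> \<le> e'" if x: "x \<in> {0..1}" for x
      proof -
        have xt: "x - t \<in> {-1..1}" "x - t' \<in> {-1..1}" using x t t' by auto
        have ne: "x - t' \<noteq> x - t" using tt by simp
        obtain \<xi> where \<xi>: "\<xi> \<in> {-1..1}" "\<bar>\<xi> - (x - t)\<bar> \<le> \<bar>(x - t') - (x - t)\<bar>"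
            "H (x - t') - H (x - t) = ((x - t') - (x - t)) * hh \<xi>"
          using mvt[OF xt(2) xt(1) ne] by blast
        have "(1 / (t' - t)) * (H (x - t') - H (x - t)) = - hh \<xi>" using \<xi>(3) tt by (simp add: field_simps)
        then have qx: "q x = hh (x - t) - hh \<xi>" by (simp add: q_def)
        have "dist \<xi> (x - t) < \<eta>" using \<xi>(2) dt by (simp add: dist_real_def abs_minus_commute)
        then have "dist (hh \<xi>) (hh (x - t)) < e'" using \<eta>p \<xi>(1) xt(1) by blast
        then show ?thesis using qx by (simp add: dist_real_def abs_minus_commute)
      qed
      have quot: "integral {0..1} (\<lambda>x. q x * k x) = (\<Psi> t' - \<Psi> t) / (t' - t)"
      proof -
        have i1: "(\<lambda>x. H (x - t') * k x) integrable_on {0..1}" by (rule prod_int[OF cHt[OF t'] kabs])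
        have i2: "(\<lambda>x. H (x - t) * k x) integrable_on {0..1}" by (rule prod_int[OF cHt[OF t] kabs])
        have i3: "(\<lambda>x. hh (x - t) * k x) integrable_on {0..1}" by (rule prod_int[OF chh kabs])
        have i12: "(\<lambda>x. (1 / (t' - t)) * (H (x - t') * k x - H (x - t) * k x)) integrable_on {0..1}"
          by (rule integrable_on_mult_right[OF integrable_diff[OF i1 i2]])
        have "integral {0..1} (\<lambda>x. q x * k x)
            = integral {0..1} (\<lambda>x. (1 / (t' - t)) * (H (x - t') * k x - H (x - t) * k x) + hh (x - t) * k x)"
          by (rule integral_cong) (simp add: q_def algebra_simps)
        also have "\<dots> = integral {0..1} (\<lambda>x. (1 / (t' - t)) * (H (x - t') * k x - H (x - t) * k x)) + D t"
          using integral_add[OF i12 i3] by (simp add: D_def)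
        also have "\<dots> = (1 / (t' - t)) * (\<Psi> t' - \<Psi> t)"
          using integral_diff[OF i1 i2] D0[OF t] by (simp add: \<Psi>_def)
        finally show ?thesis by simp
      qed
      have "\<bar>integral {0..1} (\<lambda>x. q x * k x)\<bar> \<le> e' * Kk"
        unfolding Kk_def by (rule absint_bound[OF cq kabs qb])
      also have "\<dots> < \<epsilon>"
      proof -
        have "e' * Kk = \<epsilon> * (Kk / (Kk + 1))" by (simp add: e'_def)
        also have "\<dots> < \<epsilon> * 1" using \<epsilon> Kk0 by (intro mult_strict_left_mono) auto
        finally show ?thesis by simp
      qed
      finally show "dist ((\<Psi> t' - \<Psi> t) / (t' - t)) 0 < \<epsilon>" using quot by (simp add: dist_real_def)
    qed
  qed
  obtain c\<Psi> where c\<Psi>: "\<And>t. t \<in> {0..1} \<Longrightarrow> \<Psi> t = c\<Psi>"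
    using has_field_derivative_zero_constant[OF convex_real_interval(5) \<Psi>d] by blast
  have \<Psi>1: "\<Psi> 1 = 0"
  proof -
    have "integral {0..1} (\<lambda>x. H (x - 1) * k x) = integral {0..1::real} (\<lambda>_. 0::real)"
    proof (rule Henstock_Kurzweil_Integration.integral_cong)
      fix x :: real assume "x \<in> {0..1}"
      then have "x - 1 \<in> {-3..0}" by auto
      then show "H (x - 1) * k x = 0" using H0 by simp
    qed
    then show ?thesis by (simp add: \<Psi>_def)
  qed
  have \<Psi>0: "\<Psi> t = 0" if "t \<in> {0..1}" for t
    using c\<Psi>[OF that] c\<Psi>[of 1] \<Psi>1 by simp
  obtain \<I> where P1: "finite \<I>" and P3: "\<Union>\<I> = {0..1}"
    and P4: "\<And>I. I \<in> \<I> \<Longrightarrow> is_interval I \<and> (\<exists>x\<in>I. \<exists>y\<in>I. x < y) \<and> continuous_on I g"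
    using g_pc by (auto simp: piecewise_continuous_on_def)
  define E where "E = (\<Union>I\<in>\<I>. {Inf I, Sup I})"
  have Ef: "finite E" using P1 by (simp add: E_def)
  have Isub: "I \<subseteq> {0..1}" if "I \<in> \<I>" for I using P3 that by auto
  have kcont_piece: "continuous_on I k" if I: "I \<in> \<I>" for I
    unfolding k_def using P4[OF I] by (intro continuous_on_diff continuous_on_const) auto
  have kcont: "isCont k x" if x: "x \<in> {0..1}" "x \<notin> E" for x
  proof -
    have "x \<in> \<Union>\<I>" using x P3 by simp
    then obtain I where I: "I \<in> \<I>" "x \<in> I" by blast
    have ne: "I \<noteq> {}" using I by auto
    have bb: "bdd_below I" "bdd_above I"
      using Isub[OF I(1)] by (auto intro!: bdd_belowI[of _ 0] bdd_aboveI[of _ 1])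
    have "Inf I \<le> x" by (rule cInf_lower[OF I(2) bb(1)])
    moreover have "x \<le> Sup I" by (rule cSup_upper[OF I(2) bb(2)])
    moreover have "x \<noteq> Inf I" "x \<noteq> Sup I" using x(2) I(1) by (auto simp: E_def)
    ultimately have xin: "x \<in> {Inf I<..<Sup I}" by auto
    have "{Inf I<..<Sup I} \<subseteq> I" using interval_inner P4[OF I(1)] ne bb by blast
    then have "{Inf I<..<Sup I} \<subseteq> interior I" by (rule interior_maximal) simp
    then have "x \<in> interior I" using xin by blast
    then show ?thesis using continuous_on_interior[OF kcont_piece[OF I(1)]] by blast
  qed
  define \<kappa> where "\<kappa> = (\<lambda>x. integral {0..1} k - integral {0..x} k)"
  have \<kappa>c: "continuous_on {0..1} \<kappa>"
    unfolding \<kappa>_def by (intro continuous_on_diff continuous_on_const indefinite_integral_continuous_1 ki)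
  have \<kappa>1: "\<kappa> 1 = 0" by (simp add: \<kappa>_def)
  have \<kappa>d: "(\<kappa> has_vector_derivative - k x) (at x)" if x: "x \<in> {0<..<1} - E" for x
  proof -
    have xi: "x \<in> interior ({0..1} - E)"
    proof -
      have "open ({0<..<1} - E)" using Ef by (intro open_Diff finite_imp_closed) auto
      moreover have "{0<..<1} - E \<subseteq> {0..1} - E" by auto
      ultimately have "{0<..<1} - E \<subseteq> interior ({0..1} - E)" by (intro interior_maximal)
      then show ?thesis using x by auto
    qed
    have "((\<lambda>u. integral {0..u} k) has_vector_derivative k x) (at x within ({0..1} - E))"
    proof (rule integral_has_vector_derivative_continuous_at[OF ki _ Ef])
      show "x \<in> {0..1} - E" using x by auto
      show "continuous (at x within {0..1} - E) k"
        using kcont[of x] x by (auto intro: continuous_at_imp_continuous_at_within)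
    qed
    then have "((\<lambda>u. integral {0..u} k) has_vector_derivative k x) (at x)"
      using at_within_interior[OF xi] by simp
    then have "((\<lambda>u. integral {0..1} k - integral {0..u} k) has_vector_derivative (0 - k x)) (at x)"
      by (intro has_vector_derivative_diff has_vector_derivative_const)
    then show ?thesis by (simp add: \<kappa>_def)
  qed
  have \<Lambda>: "integral {0..1} (\<lambda>x. hh (x - t) * \<kappa> x) = 0" if t: "t \<in> {0..1}" for t :: real
  proof -
    have "((\<lambda>x. hh (x - t) * \<kappa> x) has_integral \<Psi> t) {0..1}"
    proof (rule integration_by_parts_interior_strong[OF bounded_bilinear_mult Ef, of 0 1 "\<lambda>x. H (x - t)" \<kappa> "\<lambda>x. hh (x - t)" "\<lambda>x. - k x"])
      show "0 \<le> (1::real)" by simp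
      show "continuous_on {0..1} (\<lambda>x. H (x - t))" by (rule cHt[OF t])
      show "continuous_on {0..1} \<kappa>" by (rule \<kappa>c)
      show "((\<lambda>x. H (x - t)) has_vector_derivative hh (x - t)) (at x)" if x: "x \<in> {0<..<1} - E" for x
      proof -
        have "x - t \<in> {-3<..<3}" using x t by auto
        then have d: "(H has_real_derivative hh (x - t)) (at (x - t))" by (rule DH)
        have d': "((\<lambda>x. x - t) has_real_derivative 1) (at x)"
          by (auto intro!: derivative_eq_intros)
        have "((\<lambda>x. H (x - t)) has_real_derivative hh (x - t) * 1) (at x)"
          using DERIV_chain2[where f=H and g="\<lambda>x. x - t" and x=x and s=UNIV, OF d d'] by simp
        then show ?thesis by (simp add: has_real_derivative_iff_has_vector_derivative)
      qed
      show "(\<kappa> has_vector_derivative - k x) (at x)" if "x \<in> {0<..<1} - E" for x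
        using \<kappa>d that by blast
      show "((\<lambda>x. H (x - t) * - k x) has_integral H (1 - t) * \<kappa> 1 - H (0 - t) * \<kappa> 0 - \<Psi> t) {0..1}"
      proof -
        have H0t: "H (0 - t) = 0" using H0 t by auto
        have "((\<lambda>x. H (x - t) * k x) has_integral \<Psi> t) {0..1}"
          unfolding \<Psi>_def using prod_int[OF cHt[OF t] kabs] by (rule integrable_integral)
        then have "((\<lambda>x. - (H (x - t) * k x)) has_integral - \<Psi> t) {0..1}" by (rule has_integral_neg)
        then show ?thesis using \<kappa>1 H0t by simp
      qed
    qed
    then show ?thesis using \<Psi>0[OF t] by (simp add: integral_unique)
  qed
  define gg where "gg = (\<lambda>v. \<kappa> (1 - max 0 (min v 1)))"
  have Zgg: "Zf gg"
  proof -
    have "continuous_on UNIV (\<lambda>v::real. 1 - max 0 (min v 1))" by (intro continuous_intros)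
    then have "continuous_on UNIV gg"
      unfolding gg_def by (rule continuous_on_compose2[OF \<kappa>c]) auto
    moreover have "gg v = 0" if "v \<le> 0" for v using that \<kappa>1 by (simp add: gg_def)
    ultimately show ?thesis by (simp add: Zf_def)
  qed
  have cv0: "cv hh gg u = 0" if u: "u \<le> 1" for u
  proof (cases "u < 0")
    case True
    then show ?thesis using cv_nonpos[OF Zhh] by simp
  next
    case False
    define t where "t = 1 - u"
    have t01: "t \<in> {0..1}" using u False by (simp add: t_def)
    have c\<kappa>: "continuous_on {-t..u} (\<lambda>w. hh w * \<kappa> (w + t))"
    proof -
      have "continuous_on {-t..u} (\<lambda>w. \<kappa> (w + t))"
        by (rule continuous_on_compose2[OF \<kappa>c]) (auto intro!: continuous_intros simp: t_def)
      then show ?thesis using continuous_on_subset[OF hh_cont] by (intro continuous_on_mult) auto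
    qed
    have "0 = integral {0..1} (\<lambda>x. hh (x - t) * \<kappa> x)" using \<Lambda>[OF t01] by simp
    also have "\<dots> = integral {0 - t..1 - t} (\<lambda>w. hh (w + t - t) * \<kappa> (w + t))" by (rule integral_shift_form)
    also have "\<dots> = integral {-t..u} (\<lambda>w. hh w * \<kappa> (w + t))" by (simp add: t_def)
    also have "\<dots> = integral {0..u} (\<lambda>w. hh w * \<kappa> (w + t))"
      by (rule int_zero_left) (use False Zhh integrable_continuous_real[OF c\<kappa>] t01 in \<open>auto simp: Zf_def\<close>)
    also have "\<dots> = cv hh gg u"
      unfolding cv_def
    proof (rule integral_cong)
      fix w assume w: "w \<in> {0..u}"
      then have "max 0 (min (u - w) 1) = u - w" using u by auto
      then show "hh w * \<kappa> (w + t) = hh w * gg (u - w)" by (simp add: gg_def t_def algebra_simps)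
    qed
    finally show ?thesis by simp
  qed
  have gg0: "\<And>v. v \<le> 1 \<Longrightarrow> gg v = 0"
    by (rule titchmarsh_onesided[OF Zhh Zgg _ cv0 nz]) simp_all
  have \<kappa>0: "\<kappa> x = 0" if x: "x \<in> {0..1}" for x
    using gg0[of "1 - x"] x by (simp add: gg_def)
  have k_inner: "k x = 0" if x: "x \<in> {0<..<1} - E" for x
  proof -
    have d1: "(\<kappa> has_real_derivative - k x) (at x)"
      using \<kappa>d[OF x] by (simp add: has_real_derivative_iff_has_vector_derivative)
    have d2: "(\<kappa> has_real_derivative 0) (at x)"
    proof (rule has_field_derivative_transform_within_open[OF DERIV_const open_greaterThanLessThan])
      show "x \<in> {0<..<1}" using x by simp
      show "\<And>z. z \<in> {0<..<1} \<Longrightarrow> 0 = \<kappa> z" using \<kappa>0 by simp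
    qed
    from DERIV_unique[OF d1 d2] show ?thesis by simp
  qed
  have k_all: "k x = 0" if x: "x \<in> {0..1}" for x
  proof -
    have "x \<in> \<Union>\<I>" using x P3 by simp
    then obtain I where I: "I \<in> \<I>" "x \<in> I" by blast
    obtain a b where ab: "a \<in> I" "b \<in> I" "a < b" using P4[OF I(1)] by auto
    show ?thesis
    proof (rule dense_zero[of I a b k "E \<union> {0, 1}"])
      show "is_interval I" using P4[OF I(1)] by blast
      show "a \<in> I" "b \<in> I" "a < b" by (rule ab)+
      show "continuous_on I k" by (rule kcont_piece[OF I(1)])
      show "finite (E \<union> {0, 1})" using Ef by simp
      show "x \<in> I" by (rule I(2))
      fix y assume y: "y \<in> I" "y \<notin> E \<union> {0, 1}"
      then have "y \<in> {0<..<1} - E" using Isub[OF I(1)] by auto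
      then show "k y = 0" by (rule k_inner)
    qed
  qed
  have "g x = G" if "x \<in> {0..1}" for x using k_all[OF that] by (simp add: k_def)
  then show False using g_nonconst by auto
qed


end
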